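(* Let $\Gamma$ be a discrete group, $X$ a $\Gamma$-boundary and $x\in X_0^0$. Then $C^*_{\lambda_{\Gamma/\Gamma_x^0}\times\mathcal P_x}(\Gamma,X)$ is simple.
   Context: A $\Gamma$-boundary is a compact Hausdorff space with a minimal and strongly proximal $\Gamma$-action by homeomorphisms. $\Gamma_x^0=\{g: g\text{ fixes pointwise an open neighborhood of }x\}$, and $X_0^0$ is the set of continuity points of $x\mapsto\Gamma_x^0$ into the space of subgroups with the Chabauty topology (induced from $\{0,1\}^\Gamma$). $\lambda_{\Gamma/\Gamma_x^0}$ is the quasi-regular representation on $\ell^2(\Gamma/\Gamma_x^0)$, and $\mathcal P_x\colon C(X)\to B(\ell^2(\Gamma/\Gamma_x^0))$ is the multiplication representation by $\mathcal P_x(f)(g\Gamma_x^0)=f(gx)$. $C^*_{\lambda_{\Gamma/\Gamma_x^0}\times\mathcal P_x}(\Gamma,X)$ is the closed linear span of $\{\mathcal P_x(f)\lambda_{\Gamma/\Gamma_x^0}(g):f\in C(X),g\in\Gamma\}$. *)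

theory Defs
  imports "HOL-Probability.Probability"
begin

text \<open>The discrete group Gamma is a type of class group_add (written additively,
not assumed commutative); X is a compact Hausdorff space (a t2_space type whose
universe is compact); act is a left action by homeomorphisms.\<close>

definition group_action :: "('g::group_add \<Rightarrow> 'x::topological_space \<Rightarrow> 'x) \<Rightarrow> bool" where
  "group_action act \<longleftrightarrow>
     (\<forall>y. act 0 y = y) \<and> (\<forall>g h y. act (g + h) y = act g (act h y)) \<and>
     (\<forall>g. continuous_on UNIV (act g))"

definition minimal_action :: "('g::group_add \<Rightarrow> 'x::topological_space \<Rightarrow> 'x) \<Rightarrow> bool" where
  "minimal_action act \<longleftrightarrow> (\<forall>y. closure (range (\<lambda>g. act g y)) = UNIV)"

text \<open>Strong proximality: for every Borel probability measure mu on X, the weak*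
closure of the orbit of mu contains a Dirac measure delta_y.\<close>
definition strongly_proximal :: "('g::group_add \<Rightarrow> 'x::topological_space \<Rightarrow> 'x) \<Rightarrow> bool" where
  "strongly_proximal act \<longleftrightarrow>
     (\<forall>M::'x measure. prob_space M \<and> sets M = sets borel \<longrightarrow>
        (\<exists>y. \<forall>F. finite F \<and> (\<forall>f\<in>F. continuous_on UNIV (f :: 'x \<Rightarrow> real)) \<longrightarrow>
              (\<forall>\<epsilon>>0. \<exists>g. \<forall>f\<in>F. \<bar>(\<integral>z. f z \<partial>(distr M borel (act g))) - f y\<bar> < \<epsilon>)))"

definition gamma_boundary :: "('g::group_add \<Rightarrow> 'x::t2_space \<Rightarrow> 'x) \<Rightarrow> bool" where
  "gamma_boundary act \<longleftrightarrow> compact (UNIV :: 'x set) \<and> group_action act \<and>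
     minimal_action act \<and> strongly_proximal act"

definition Gamma0 :: "('g::group_add \<Rightarrow> 'x::topological_space \<Rightarrow> 'x) \<Rightarrow> 'x \<Rightarrow> 'g set" where
  "Gamma0 act x = {g. \<exists>U. open U \<and> x \<in> U \<and> (\<forall>y\<in>U. act g y = y)}"

text \<open>Continuity of x |-> Gamma_x^0 into {0,1}^Gamma with the product (Chabauty)
topology: every coordinate is locally constant at x.\<close>
definition X00 :: "('g::group_add \<Rightarrow> 'x::topological_space \<Rightarrow> 'x) \<Rightarrow> 'x set" where
  "X00 act = {x. \<forall>g. \<exists>U. open U \<and> x \<in> U \<and>
                  (\<forall>y\<in>U. (g \<in> Gamma0 act y \<longleftrightarrow> g \<in> Gamma0 act x))}"

definition lcoset :: "'g::group_add \<Rightarrow> 'g set \<Rightarrow> 'g set" where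
  "lcoset g H = (\<lambda>h. g + h) ` H"

definition cosets :: "'g::group_add set \<Rightarrow> 'g set set" where
  "cosets H = range (\<lambda>g. lcoset g H)"

text \<open>Vectors of ell^2(Q) are functions on 'a (here 'a = 'g set) vanishing off Q.\<close>
definition l2 :: "'a set \<Rightarrow> ('a \<Rightarrow> complex) set" where
  "l2 Q = {\<xi>. (\<forall>c. c \<notin> Q \<longrightarrow> \<xi> c = 0) \<and> (\<lambda>c. (norm (\<xi> c))\<^sup>2) summable_on Q}"

definition l2norm :: "'a set \<Rightarrow> ('a \<Rightarrow> complex) \<Rightarrow> real" where
  "l2norm Q \<xi> = sqrt (\<Sum>\<^sub>\<infinity>c\<in>Q. (norm (\<xi> c))\<^sup>2)"

type_synonym 'a op = "('a \<Rightarrow> complex) \<Rightarrow> ('a \<Rightarrow> complex)"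

text \<open>Operators are represented extensionally: they vanish outside ell^2(Q).\<close>
definition bounded_op :: "'a set \<Rightarrow> 'a op \<Rightarrow> bool" where
  "bounded_op Q T \<longleftrightarrow>
     (\<forall>\<xi>. \<xi> \<notin> l2 Q \<longrightarrow> T \<xi> = (\<lambda>_. 0)) \<and> (\<forall>\<xi>\<in>l2 Q. T \<xi> \<in> l2 Q) \<and>
     (\<forall>\<xi>\<in>l2 Q. \<forall>\<eta>\<in>l2 Q. \<forall>a. T (\<lambda>c. a * \<xi> c + \<eta> c) = (\<lambda>c. a * T \<xi> c + T \<eta> c)) \<and>
     (\<exists>K. \<forall>\<xi>\<in>l2 Q. l2norm Q (T \<xi>) \<le> K * l2norm Q \<xi>)"

definition opnorm :: "'a set \<Rightarrow> 'a op \<Rightarrow> real" where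
  "opnorm Q T = Sup {l2norm Q (T \<xi>) | \<xi>. \<xi> \<in> l2 Q \<and> l2norm Q \<xi> \<le> 1}"

definition op_diff :: "'a op \<Rightarrow> 'a op \<Rightarrow> 'a op" where
  "op_diff T S = (\<lambda>\<xi> c. T \<xi> c - S \<xi> c)"

definition zero_op :: "'a op" where
  "zero_op = (\<lambda>\<xi> c. 0)"

definition quasi_regular :: "'g::group_add set \<Rightarrow> 'g \<Rightarrow> 'g set op" where
  "quasi_regular H g \<xi> =
     (if \<xi> \<in> l2 (cosets H) then (\<lambda>c. \<xi> ((\<lambda>k. - g + k) ` c)) else (\<lambda>_. 0))"

definition mult_rep :: "('g::group_add \<Rightarrow> 'x \<Rightarrow> 'x) \<Rightarrow> 'x \<Rightarrow> 'g set \<Rightarrow> ('x \<Rightarrow> complex) \<Rightarrow> 'g set op" where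
  "mult_rep act x H f \<xi> =
     (if \<xi> \<in> l2 (cosets H)
      then (\<lambda>c. if c \<in> cosets H then f (act (SOME k. c = lcoset k H) x) * \<xi> c else 0)
      else (\<lambda>_. 0))"

definition cspan :: "'a op set \<Rightarrow> 'a op set" where
  "cspan S = {T. \<exists>n (a :: nat \<Rightarrow> complex) T'. (\<forall>i<n. T' i \<in> S) \<and>
                   T = (\<lambda>\<xi> c. \<Sum>i<n. a i * T' i \<xi> c)}"

text \<open>C*_{lambda x P_x}(Gamma, X): the norm-closed linear span of P_x(f) lambda(g).\<close>
definition crossed_alg :: "('g::group_add \<Rightarrow> 'x::topological_space \<Rightarrow> 'x) \<Rightarrow> 'x \<Rightarrow> 'g set op set" where
  "crossed_alg act x =
     (let H = Gamma0 act x; Q = cosets H;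
          G = {(\<lambda>\<xi>. mult_rep act x H f (quasi_regular H g \<xi>)) | f g. continuous_on UNIV f}
      in {T. bounded_op Q T \<and> (\<forall>\<epsilon>>0. \<exists>S\<in>cspan G. opnorm Q (op_diff T S) < \<epsilon>)})"

definition closed_ideal :: "'a set \<Rightarrow> 'a op set \<Rightarrow> 'a op set \<Rightarrow> bool" where
  "closed_ideal Q A J \<longleftrightarrow> J \<subseteq> A \<and> zero_op \<in> J \<and>
     (\<forall>a\<in>J. \<forall>b\<in>J. (\<lambda>\<xi> c. a \<xi> c + b \<xi> c) \<in> J) \<and>
     (\<forall>a\<in>J. \<forall>z. (\<lambda>\<xi> c. z * a \<xi> c) \<in> J) \<and>
     (\<forall>a\<in>A. \<forall>j\<in>J. a \<circ> j \<in> J \<and> j \<circ> a \<in> J) \<and>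
     (\<forall>T\<in>A. (\<forall>\<epsilon>>0. \<exists>j\<in>J. opnorm Q (op_diff T j) < \<epsilon>) \<longrightarrow> T \<in> J)"

definition simple_cstar :: "'a set \<Rightarrow> 'a op set \<Rightarrow> bool" where
  "simple_cstar Q A \<longleftrightarrow> A \<noteq> {zero_op} \<and>
     (\<forall>J. closed_ideal Q A J \<longrightarrow> J = {zero_op} \<or> J = A)"

end

theory Submission
  imports Defs
begin

lemma l2_vanish: "\<xi> \<in> l2 Q \<Longrightarrow> c \<notin> Q \<Longrightarrow> \<xi> c = 0"
  by (auto simp: l2_def)

lemma l2_summ: "\<xi> \<in> l2 Q \<Longrightarrow> (\<lambda>c. (cmod (\<xi> c))\<^sup>2) summable_on Q"
  by (auto simp: l2_def)

lemma l2_zero[simp]: "(\<lambda>_. 0) \<in> l2 Q"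
  by (auto simp: l2_def)

lemma l2_dom:
  assumes "\<xi> \<in> l2 Q" "\<And>c. cmod (\<zeta> c) \<le> B * cmod (\<xi> c)"
  shows "\<zeta> \<in> l2 Q"
proof -
  have B: "0 \<le> B" if "\<xi> c \<noteq> 0" for c
  proof (rule ccontr)
    assume "\<not> 0 \<le> B"
    then have "B * cmod (\<xi> c) < 0" using that by (simp add: mult_neg_pos)
    then show False using assms(2)[of c] norm_ge_zero[of "\<zeta> c"] by linarith
  qed
  have "(\<lambda>c. B\<^sup>2 * (cmod (\<xi> c))\<^sup>2) summable_on Q"
    by (intro summable_on_cmult_right l2_summ assms)
  moreover have "(cmod (\<zeta> c))\<^sup>2 \<le> B\<^sup>2 * (cmod (\<xi> c))\<^sup>2" for c
  proof (cases "\<xi> c = 0")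
    case True then show ?thesis using assms(2)[of c] by simp
  next
    case False
    have "(cmod (\<zeta> c))\<^sup>2 \<le> (B * cmod (\<xi> c))\<^sup>2"
      by (intro power_mono assms(2)) auto
    then show ?thesis by (simp add: power_mult_distrib)
  qed
  ultimately have "(\<lambda>c. (cmod (\<zeta> c))\<^sup>2) summable_on Q"
    by (rule summable_on_comparison_test) auto
  moreover have "\<zeta> c = 0" if "c \<notin> Q" for c
    using assms(2)[of c] l2_vanish[OF assms(1) that] by simp
  ultimately show ?thesis by (auto simp: l2_def)
qed

lemma l2_add:
  assumes "\<xi> \<in> l2 Q" "\<eta> \<in> l2 Q"
  shows "(\<lambda>c. \<xi> c + \<eta> c) \<in> l2 Q"
proof -
  have "(\<lambda>c. 2 * (cmod (\<xi> c))\<^sup>2 + 2 * (cmod (\<eta> c))\<^sup>2) summable_on Q"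
    by (intro summable_on_add summable_on_cmult_right l2_summ assms)
  moreover have "(cmod (\<xi> c + \<eta> c))\<^sup>2 \<le> 2 * (cmod (\<xi> c))\<^sup>2 + 2 * (cmod (\<eta> c))\<^sup>2" for c
  proof -
    have "cmod (\<xi> c + \<eta> c) \<le> cmod (\<xi> c) + cmod (\<eta> c)" by (rule norm_triangle_ineq)
    then have "(cmod (\<xi> c + \<eta> c))\<^sup>2 \<le> (cmod (\<xi> c) + cmod (\<eta> c))\<^sup>2"
      by (intro power_mono) auto
    also have "\<dots> = 2 * (cmod (\<xi> c))\<^sup>2 + 2 * (cmod (\<eta> c))\<^sup>2 - (cmod (\<xi> c) - cmod (\<eta> c))\<^sup>2"
      by (simp add: power2_eq_square algebra_simps)
    also have "\<dots> \<le> 2 * (cmod (\<xi> c))\<^sup>2 + 2 * (cmod (\<eta> c))\<^sup>2"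
      by simp
    finally show ?thesis .
  qed
  ultimately have "(\<lambda>c. (cmod (\<xi> c + \<eta> c))\<^sup>2) summable_on Q"
    by (rule summable_on_comparison_test) auto
  then show ?thesis using assms by (auto simp: l2_def)
qed

lemma l2_scale: "\<xi> \<in> l2 Q \<Longrightarrow> (\<lambda>c. a * \<xi> c) \<in> l2 Q"
  by (rule l2_dom[where B="cmod a"]) (auto simp: norm_mult)

lemma l2_mult: "\<xi> \<in> l2 Q \<Longrightarrow> (\<And>c. cmod (m c) \<le> B) \<Longrightarrow> (\<lambda>c. m c * \<xi> c) \<in> l2 Q"
  by (rule l2_dom[where B="B"]) (auto simp: norm_mult intro: mult_right_mono)

lemma l2_diff: "\<xi> \<in> l2 Q \<Longrightarrow> \<eta> \<in> l2 Q \<Longrightarrow> (\<lambda>c. \<xi> c - \<eta> c) \<in> l2 Q"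
  using l2_add[of \<xi> Q "\<lambda>c. (-1) * \<eta> c"] l2_scale[of \<eta> Q "-1"] by simp

lemma l2_uminus: "\<xi> \<in> l2 Q \<Longrightarrow> (\<lambda>c. - \<xi> c) \<in> l2 Q"
  using l2_scale[of \<xi> Q "-1"] by simp

lemma l2_sum: "finite I \<Longrightarrow> (\<And>i. i \<in> I \<Longrightarrow> f i \<in> l2 Q) \<Longrightarrow> (\<lambda>c. \<Sum>i\<in>I. f i c) \<in> l2 Q"
  by (induction I rule: finite_induct) (auto intro: l2_add)

lemma l2norm_nonneg[simp]: "0 \<le> l2norm Q \<xi>"
  by (auto simp: l2norm_def intro!: infsum_nonneg)

lemma l2norm_sq: "(l2norm Q \<xi>)\<^sup>2 = (\<Sum>\<^sub>\<infinity>c\<in>Q. (cmod (\<xi> c))\<^sup>2)"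
  by (auto simp: l2norm_def intro!: infsum_nonneg)

lemma l2norm_dom:
  assumes "\<xi> \<in> l2 Q" "\<zeta> \<in> l2 Q" "\<And>c. c \<in> Q \<Longrightarrow> cmod (\<zeta> c) \<le> B * cmod (\<xi> c)" "0 \<le> B"
  shows "l2norm Q \<zeta> \<le> B * l2norm Q \<xi>"
proof -
  have "(\<Sum>\<^sub>\<infinity>c\<in>Q. (cmod (\<zeta> c))\<^sup>2) \<le> (\<Sum>\<^sub>\<infinity>c\<in>Q. B\<^sup>2 * (cmod (\<xi> c))\<^sup>2)"
    apply (rule infsum_mono)
      apply (auto intro!: l2_summ summable_on_cmult_right assms)
    by (metis assms(3) norm_ge_zero power_mono power_mult_distrib)
  also have "\<dots> = B\<^sup>2 * (l2norm Q \<xi>)\<^sup>2"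
    by (simp add: l2norm_sq infsum_cmult_right l2_summ assms)
  finally have "(l2norm Q \<zeta>)\<^sup>2 \<le> (B * l2norm Q \<xi>)\<^sup>2"
    by (simp add: l2norm_sq power_mult_distrib)
  then show ?thesis
    using assms(4) by (meson l2norm_nonneg mult_nonneg_nonneg power2_le_imp_le)
qed

lemma l2norm_scale: "\<xi> \<in> l2 Q \<Longrightarrow> l2norm Q (\<lambda>c. a * \<xi> c) = cmod a * l2norm Q \<xi>"
  unfolding l2norm_def
  by (simp add: norm_mult power_mult_distrib infsum_cmult_right l2_summ real_sqrt_mult)

lemma l2norm_uminus: "l2norm Q (\<lambda>c. - \<xi> c) = l2norm Q \<xi>"
  unfolding l2norm_def by simp

lemma l2norm_coord:
  assumes "\<xi> \<in> l2 Q"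
  shows "cmod (\<xi> c) \<le> l2norm Q \<xi>"
proof (cases "c \<in> Q")
  case True
  have "sum (\<lambda>c. (cmod (\<xi> c))\<^sup>2) {c} \<le> (\<Sum>\<^sub>\<infinity>c\<in>Q. (cmod (\<xi> c))\<^sup>2)"
    by (rule finite_sum_le_infsum) (use True l2_summ[OF assms] in auto)
  then have "(cmod (\<xi> c))\<^sup>2 \<le> (l2norm Q \<xi>)\<^sup>2" by (simp add: l2norm_sq)
  then show ?thesis by (meson l2norm_nonneg power2_le_imp_le)
next
  case False
  then show ?thesis using l2_vanish[OF assms False] by simp
qed

lemma l2norm_eq0: "\<xi> \<in> l2 Q \<Longrightarrow> l2norm Q \<xi> = 0 \<Longrightarrow> \<xi> = (\<lambda>_. 0)"
  using l2norm_coord[of \<xi> Q] by fastforce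

lemma l2norm_triangle:
  assumes "\<xi> \<in> l2 Q" "\<eta> \<in> l2 Q"
  shows "l2norm Q (\<lambda>c. \<xi> c + \<eta> c) \<le> l2norm Q \<xi> + l2norm Q \<eta>"
proof -
  have fin: "L2_set (\<lambda>c. cmod (\<zeta> c)) F \<le> l2norm Q \<zeta>" if "\<zeta> \<in> l2 Q" "finite F" "F \<subseteq> Q" for \<zeta> F
  proof -
    have "sum (\<lambda>c. (cmod (\<zeta> c))\<^sup>2) F \<le> (\<Sum>\<^sub>\<infinity>c\<in>Q. (cmod (\<zeta> c))\<^sup>2)"
      by (rule finite_sum_le_infsum) (use that l2_summ[OF that(1)] in auto)
    then show ?thesis unfolding L2_set_def l2norm_def by simp
  qed
  have "(\<Sum>\<^sub>\<infinity>c\<in>Q. (cmod (\<xi> c + \<eta> c))\<^sup>2) \<le> (l2norm Q \<xi> + l2norm Q \<eta>)\<^sup>2"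
  proof (rule infsum_le_finite_sums)
    show "(\<lambda>c. (cmod (\<xi> c + \<eta> c))\<^sup>2) summable_on Q"
      using l2_add[OF assms] by (auto simp: l2_def)
    fix F assume F: "finite F" "F \<subseteq> Q"
    have "L2_set (\<lambda>c. cmod (\<xi> c + \<eta> c)) F \<le> L2_set (\<lambda>c. cmod (\<xi> c) + cmod (\<eta> c)) F"
      by (rule L2_set_mono) (auto intro: norm_triangle_ineq)
    also have "\<dots> \<le> L2_set (\<lambda>c. cmod (\<xi> c)) F + L2_set (\<lambda>c. cmod (\<eta> c)) F"
      by (rule L2_set_triangle_ineq)
    also have "\<dots> \<le> l2norm Q \<xi> + l2norm Q \<eta>"
      using fin[OF assms(1) F] fin[OF assms(2) F] by simp
    finally have "(L2_set (\<lambda>c. cmod (\<xi> c + \<eta> c)) F)\<^sup>2 \<le> (l2norm Q \<xi> + l2norm Q \<eta>)\<^sup>2"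
      by (intro power_mono) auto
    then show "(\<Sum>c\<in>F. (cmod (\<xi> c + \<eta> c))\<^sup>2) \<le> (l2norm Q \<xi> + l2norm Q \<eta>)\<^sup>2"
      unfolding L2_set_def by (simp add: sum_nonneg)
  qed
  then have "(l2norm Q (\<lambda>c. \<xi> c + \<eta> c))\<^sup>2 \<le> (l2norm Q \<xi> + l2norm Q \<eta>)\<^sup>2"
    by (simp add: l2norm_sq)
  then show ?thesis by (meson add_nonneg_nonneg l2norm_nonneg power2_le_imp_le)
qed

lemma l2norm_diff_le:
  assumes "\<xi> \<in> l2 Q" "\<eta> \<in> l2 Q"
  shows "l2norm Q (\<lambda>c. \<xi> c - \<eta> c) \<le> l2norm Q \<xi> + l2norm Q \<eta>"
  using l2norm_triangle[OF assms(1) l2_uminus[OF assms(2)]] l2norm_uminus[of Q \<eta>] by simp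

lemma bop_lin0: "bounded_op Q T \<Longrightarrow> \<xi> \<in> l2 Q \<Longrightarrow> \<eta> \<in> l2 Q \<Longrightarrow>
   T (\<lambda>c. a * \<xi> c + \<eta> c) = (\<lambda>c. a * T \<xi> c + T \<eta> c)"
  unfolding bounded_op_def by blast

lemma bop_zero: "bounded_op Q T \<Longrightarrow> T (\<lambda>_. 0) = (\<lambda>_. 0)"
proof -
  assume b: "bounded_op Q T"
  have h: "T (\<lambda>c. 1 * 0 + 0) = (\<lambda>c. 1 * T (\<lambda>_. 0) c + T (\<lambda>_. 0) c)"
    by (rule bop_lin0[OF b l2_zero l2_zero])
  show ?thesis
  proof
    fix c
    have "T (\<lambda>_. 0) c = T (\<lambda>_. 0) c + T (\<lambda>_. 0) c" using fun_cong[OF h, of c] by simp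
    then show "T (\<lambda>_. 0) c = 0" by simp
  qed
qed

lemma bop_off: "bounded_op Q T \<Longrightarrow> \<xi> \<notin> l2 Q \<Longrightarrow> T \<xi> = (\<lambda>_. 0)"
  by (auto simp: bounded_op_def)

lemma bop_l2: "bounded_op Q T \<Longrightarrow> \<xi> \<in> l2 Q \<Longrightarrow> T \<xi> \<in> l2 Q"
  by (auto simp: bounded_op_def)

lemma bop_lin: "bounded_op Q T \<Longrightarrow> \<xi> \<in> l2 Q \<Longrightarrow> \<eta> \<in> l2 Q \<Longrightarrow>
   T (\<lambda>c. a * \<xi> c + \<eta> c) = (\<lambda>c. a * T \<xi> c + T \<eta> c)"
  by (auto simp: bounded_op_def)

lemma bop_add: "bounded_op Q T \<Longrightarrow> \<xi> \<in> l2 Q \<Longrightarrow> \<eta> \<in> l2 Q \<Longrightarrow>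
   T (\<lambda>c. \<xi> c + \<eta> c) = (\<lambda>c. T \<xi> c + T \<eta> c)"
  using bop_lin[of Q T \<xi> \<eta> 1] by simp

lemma bop_scale: "bounded_op Q T \<Longrightarrow> \<xi> \<in> l2 Q \<Longrightarrow>
   T (\<lambda>c. a * \<xi> c) = (\<lambda>c. a * T \<xi> c)"
  using bop_lin[of Q T \<xi> "\<lambda>_. 0" a] bop_zero[of Q T] by simp

lemma bop_diff: "bounded_op Q T \<Longrightarrow> \<xi> \<in> l2 Q \<Longrightarrow> \<eta> \<in> l2 Q \<Longrightarrow>
   T (\<lambda>c. \<xi> c - \<eta> c) = (\<lambda>c. T \<xi> c - T \<eta> c)"
  using bop_lin[of Q T \<eta> \<xi> "-1"] by (simp add: algebra_simps)

lemma bop_sum: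
  assumes b: "bounded_op Q T" and "finite I" and "\<And>i. i \<in> I \<Longrightarrow> f i \<in> l2 Q"
  shows "T (\<lambda>c. \<Sum>i\<in>I. f i c) = (\<lambda>c. \<Sum>i\<in>I. T (f i) c)"
  using assms(2,3)
proof (induction I rule: finite_induct)
  case empty then show ?case using bop_zero[OF b] by simp
next
  case (insert i I)
  have "T (\<lambda>c. \<Sum>i\<in>insert i I. f i c) = T (\<lambda>c. f i c + (\<Sum>i\<in>I. f i c))"
    using insert by simp
  also have "\<dots> = (\<lambda>c. T (f i) c + T (\<lambda>c. \<Sum>i\<in>I. f i c) c)"
    using insert by (intro bop_add[OF b] l2_sum) auto
  finally show ?case using insert by simp
qed

lemma bop_bdd: "bounded_op Q T \<Longrightarrow> \<exists>K\<ge>0. \<forall>\<xi>\<in>l2 Q. l2norm Q (T \<xi>) \<le> K * l2norm Q \<xi>"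
proof -
  assume "bounded_op Q T"
  then obtain K where K: "\<forall>\<xi>\<in>l2 Q. l2norm Q (T \<xi>) \<le> K * l2norm Q \<xi>" by (auto simp: bounded_op_def)
  have "\<forall>\<xi>\<in>l2 Q. l2norm Q (T \<xi>) \<le> max K 0 * l2norm Q \<xi>"
  proof
    fix \<xi> assume "\<xi> \<in> l2 Q"
    then have "l2norm Q (T \<xi>) \<le> K * l2norm Q \<xi>" using K by blast
    also have "\<dots> \<le> max K 0 * l2norm Q \<xi>" by (intro mult_right_mono) auto
    finally show "l2norm Q (T \<xi>) \<le> max K 0 * l2norm Q \<xi>" .
  qed
  then show ?thesis by (intro exI[of _ "max K 0"]) auto
qed

lemma bopI:
  assumes "\<And>\<xi>. \<xi> \<notin> l2 Q \<Longrightarrow> T \<xi> = (\<lambda>_. 0)"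
    "\<And>\<xi>. \<xi> \<in> l2 Q \<Longrightarrow> T \<xi> \<in> l2 Q"
    "\<And>\<xi> \<eta> a. \<xi> \<in> l2 Q \<Longrightarrow> \<eta> \<in> l2 Q \<Longrightarrow> T (\<lambda>c. a * \<xi> c + \<eta> c) = (\<lambda>c. a * T \<xi> c + T \<eta> c)"
    "\<And>\<xi>. \<xi> \<in> l2 Q \<Longrightarrow> l2norm Q (T \<xi>) \<le> K * l2norm Q \<xi>"
  shows "bounded_op Q T"
  using assms unfolding bounded_op_def by blast

lemma opnorm_le:
  assumes "\<And>\<xi>. \<xi> \<in> l2 Q \<Longrightarrow> l2norm Q (T \<xi>) \<le> M * l2norm Q \<xi>" "0 \<le> M"
  shows "opnorm Q T \<le> M"
  unfolding opnorm_def
proof (rule cSup_least)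
  show "{l2norm Q (T \<xi>) |\<xi>. \<xi> \<in> l2 Q \<and> l2norm Q \<xi> \<le> 1} \<noteq> {}"
  proof -
    have "(\<lambda>_. 0) \<in> l2 Q \<and> l2norm Q (\<lambda>_. 0) \<le> 1" by (simp add: l2norm_def)
    then show ?thesis by blast
  qed
  fix r assume "r \<in> {l2norm Q (T \<xi>) |\<xi>. \<xi> \<in> l2 Q \<and> l2norm Q \<xi> \<le> 1}"
  then obtain \<xi> where "r = l2norm Q (T \<xi>)" "\<xi> \<in> l2 Q" "l2norm Q \<xi> \<le> 1" by auto
  then show "r \<le> M" using assms(1)[of \<xi>] mult_left_mono[OF \<open>l2norm Q \<xi> \<le> 1\<close> assms(2)]
    by simp
qed

lemma opnorm_bound:
  assumes b: "bounded_op Q T" and x: "\<xi> \<in> l2 Q"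
  shows "l2norm Q (T \<xi>) \<le> opnorm Q T * l2norm Q \<xi>"
proof -
  obtain K where K: "K \<ge> 0" "\<forall>\<xi>\<in>l2 Q. l2norm Q (T \<xi>) \<le> K * l2norm Q \<xi>"
    using bop_bdd[OF b] by auto
  let ?S = "{l2norm Q (T \<xi>) |\<xi>. \<xi> \<in> l2 Q \<and> l2norm Q \<xi> \<le> 1}"
  have bdd: "bdd_above ?S"
    unfolding bdd_above_def
  proof (intro exI[of _ K] ballI)
    fix r assume "r \<in> ?S"
    then obtain \<xi> where "r = l2norm Q (T \<xi>)" "\<xi> \<in> l2 Q" "l2norm Q \<xi> \<le> 1" by auto
    then show "r \<le> K" using K mult_left_mono[OF \<open>l2norm Q \<xi> \<le> 1\<close> K(1)] by force
  qed
  show ?thesis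
  proof (cases "l2norm Q \<xi> = 0")
    case True
    then have "\<xi> = (\<lambda>_. 0)" using l2norm_eq0 x by blast
    then show ?thesis using bop_zero[OF b] by (simp add: l2norm_def)
  next
    case False
    define r where "r = l2norm Q \<xi>"
    have r: "r > 0" using False l2norm_nonneg[of Q \<xi>] r_def by linarith
    define \<eta> where "\<eta> = (\<lambda>c. complex_of_real (1 / r) * \<xi> c)"
    have \<eta>: "\<eta> \<in> l2 Q" unfolding \<eta>_def by (rule l2_scale[OF x])
    have "l2norm Q \<eta> = cmod (complex_of_real (1 / r)) * r"
      unfolding \<eta>_def r_def by (rule l2norm_scale[OF x])
    moreover have cm: "cmod (complex_of_real (1 / r)) = 1 / r" using r by (simp add: norm_divide)
    ultimately have n\<eta>: "l2norm Q \<eta> = 1" using r by simp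
    have Te: "T \<eta> = (\<lambda>c. complex_of_real (1 / r) * T \<xi> c)"
      unfolding \<eta>_def by (rule bop_scale[OF b x])
    have "l2norm Q (T \<eta>) = cmod (complex_of_real (1 / r)) * l2norm Q (T \<xi>)"
      unfolding Te by (rule l2norm_scale[OF bop_l2[OF b x]])
    then have "l2norm Q (T \<eta>) = (1 / r) * l2norm Q (T \<xi>)" using cm by simp
    moreover have "l2norm Q (T \<eta>) \<le> opnorm Q T"
      unfolding opnorm_def using \<eta> n\<eta> by (intro cSup_upper bdd) auto
    ultimately have "l2norm Q (T \<xi>) \<le> opnorm Q T * r"
      using r by (metis divide_le_eq mult.commute mult_1 times_divide_eq_left)
    then show ?thesis by (simp add: r_def)
  qed
qed

lemma opnorm_nonneg: "bounded_op Q T \<Longrightarrow> 0 \<le> opnorm Q T"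
proof -
  assume b: "bounded_op Q T"
  have "(\<lambda>_. 0) \<in> l2 Q" by simp
  let ?S = "{l2norm Q (T \<xi>) |\<xi>. \<xi> \<in> l2 Q \<and> l2norm Q \<xi> \<le> 1}"
  obtain K where K: "K \<ge> 0" "\<forall>\<xi>\<in>l2 Q. l2norm Q (T \<xi>) \<le> K * l2norm Q \<xi>"
    using bop_bdd[OF b] by auto
  have bdd: "bdd_above ?S"
    unfolding bdd_above_def
  proof (intro exI[of _ K] ballI)
    fix r assume "r \<in> ?S"
    then obtain \<xi> where "r = l2norm Q (T \<xi>)" "\<xi> \<in> l2 Q" "l2norm Q \<xi> \<le> 1" by auto
    then show "r \<le> K" using K mult_left_mono[OF \<open>l2norm Q \<xi> \<le> 1\<close> K(1)] by force
  qed
  have "l2norm Q (T (\<lambda>_. 0)) \<le> opnorm Q T"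
    unfolding opnorm_def by (intro cSup_upper bdd) (auto intro!: exI[of _ "\<lambda>_. 0"] simp: l2norm_def)
  then show ?thesis using l2norm_nonneg[of Q "T (\<lambda>_. 0)"] by linarith
qed

lemma bop_op_diff:
  assumes "bounded_op Q T" "bounded_op Q S"
  shows "bounded_op Q (op_diff T S)"
proof -
  obtain K1 where K1: "K1 \<ge> 0" "\<forall>\<xi>\<in>l2 Q. l2norm Q (T \<xi>) \<le> K1 * l2norm Q \<xi>"
    using bop_bdd[OF assms(1)] by auto
  obtain K2 where K2: "K2 \<ge> 0" "\<forall>\<xi>\<in>l2 Q. l2norm Q (S \<xi>) \<le> K2 * l2norm Q \<xi>"
    using bop_bdd[OF assms(2)] by auto
  show ?thesis
  proof (rule bopI[where K="K1 + K2"])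
    fix \<xi> assume "\<xi> \<notin> l2 Q" then show "op_diff T S \<xi> = (\<lambda>_. 0)"
      using assms by (simp add: op_diff_def bop_off)
  next
    fix \<xi> assume "\<xi> \<in> l2 Q" then show "op_diff T S \<xi> \<in> l2 Q"
      using assms by (simp add: op_diff_def l2_diff bop_l2)
  next
    fix \<xi> \<eta> a assume x: "\<xi> \<in> l2 Q" and y: "\<eta> \<in> l2 Q"
    show "op_diff T S (\<lambda>c. a * \<xi> c + \<eta> c) = (\<lambda>c. a * op_diff T S \<xi> c + op_diff T S \<eta> c)"
      unfolding op_diff_def bop_lin[OF assms(1) x y] bop_lin[OF assms(2) x y] by (simp add: algebra_simps)
  next
    fix \<xi> assume x: "\<xi> \<in> l2 Q"
    have "l2norm Q (op_diff T S \<xi>) \<le> l2norm Q (T \<xi>) + l2norm Q (S \<xi>)"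
      unfolding op_diff_def by (rule l2norm_diff_le) (use assms x in \<open>auto intro: bop_l2\<close>)
    also have "\<dots> \<le> (K1 + K2) * l2norm Q \<xi>"
      using K1 K2 x by (simp add: distrib_right add_mono)
    finally show "l2norm Q (op_diff T S \<xi>) \<le> (K1 + K2) * l2norm Q \<xi>" .
  qed
qed

lemma bop_add_op:
  assumes "bounded_op Q T" "bounded_op Q S"
  shows "bounded_op Q (\<lambda>\<xi> c. a * T \<xi> c + S \<xi> c)"
proof -
  obtain K1 where K1: "K1 \<ge> 0" "\<forall>\<xi>\<in>l2 Q. l2norm Q (T \<xi>) \<le> K1 * l2norm Q \<xi>"
    using bop_bdd[OF assms(1)] by auto
  obtain K2 where K2: "K2 \<ge> 0" "\<forall>\<xi>\<in>l2 Q. l2norm Q (S \<xi>) \<le> K2 * l2norm Q \<xi>"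
    using bop_bdd[OF assms(2)] by auto
  show ?thesis
  proof (rule bopI[where K="cmod a * K1 + K2"])
    fix \<xi> assume "\<xi> \<notin> l2 Q" then show "(\<lambda>c. a * T \<xi> c + S \<xi> c) = (\<lambda>_. 0)"
      using assms by (simp add: bop_off)
  next
    fix \<xi> assume "\<xi> \<in> l2 Q" then show "(\<lambda>c. a * T \<xi> c + S \<xi> c) \<in> l2 Q"
      using assms by (simp add: l2_add l2_scale bop_l2)
  next
    fix \<xi> \<eta> b assume x: "\<xi> \<in> l2 Q" and y: "\<eta> \<in> l2 Q"
    show "(\<lambda>c. a * T (\<lambda>c. b * \<xi> c + \<eta> c) c + S (\<lambda>c. b * \<xi> c + \<eta> c) c) =
      (\<lambda>c. b * (a * T \<xi> c + S \<xi> c) + (a * T \<eta> c + S \<eta> c))"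
      unfolding bop_lin[OF assms(1) x y] bop_lin[OF assms(2) x y] by (simp add: algebra_simps)
  next
    fix \<xi> assume x: "\<xi> \<in> l2 Q"
    have "l2norm Q (\<lambda>c. a * T \<xi> c + S \<xi> c) \<le> l2norm Q (\<lambda>c. a * T \<xi> c) + l2norm Q (S \<xi>)"
      by (rule l2norm_triangle) (use assms x in \<open>auto intro: bop_l2 l2_scale\<close>)
    also have "\<dots> = cmod a * l2norm Q (T \<xi>) + l2norm Q (S \<xi>)"
      using l2norm_scale[OF bop_l2[OF assms(1) x], of a] by simp
    also have "\<dots> \<le> (cmod a * K1 + K2) * l2norm Q \<xi>"
      using K1 K2 x by (simp add: distrib_right add_mono mult_left_mono mult.assoc)
    finally show "l2norm Q (\<lambda>c. a * T \<xi> c + S \<xi> c) \<le> (cmod a * K1 + K2) * l2norm Q \<xi>" .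
  qed
qed

lemma bop_zero_op: "bounded_op Q zero_op"
  by (rule bopI[where K=0]) (auto simp: zero_op_def l2norm_def)

lemma bop_cspan:
  fixes n :: nat
  assumes "\<And>i. i < n \<Longrightarrow> bounded_op Q (T i)"
  shows "bounded_op Q (\<lambda>\<xi> c. \<Sum>i<n. a i * T i \<xi> c)"
  using assms
proof (induction n)
  case 0 then show ?case using bop_zero_op by (simp add: zero_op_def)
next
  case (Suc n)
  have "bounded_op Q (\<lambda>\<xi> c. a n * T n \<xi> c + (\<Sum>i<n. a i * T i \<xi> c))"
    using Suc by (intro bop_add_op) auto
  then show ?case by (simp add: add.commute)
qed

lemma opnorm_zero_diff: "opnorm Q (op_diff T T) = 0"
proof -
  have "opnorm Q (op_diff T T) \<le> 0"
    by (rule opnorm_le) (auto simp: op_diff_def l2norm_def)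
  moreover have "0 \<le> opnorm Q (op_diff T T)"
  proof -
    have "op_diff T T = zero_op" by (simp add: op_diff_def zero_op_def)
    then show ?thesis using opnorm_nonneg[OF bop_zero_op] by simp
  qed
  ultimately show ?thesis by simp
qed

lemma opnorm_comp:
  assumes "bounded_op Q S" "bounded_op Q T"
  shows "opnorm Q (S \<circ> T) \<le> opnorm Q S * opnorm Q T"
proof (rule opnorm_le)
  fix \<xi> assume x: "\<xi> \<in> l2 Q"
  have "l2norm Q (S (T \<xi>)) \<le> opnorm Q S * l2norm Q (T \<xi>)"
    by (rule opnorm_bound[OF assms(1) bop_l2[OF assms(2) x]])
  also have "\<dots> \<le> opnorm Q S * (opnorm Q T * l2norm Q \<xi>)"
    by (rule mult_left_mono[OF opnorm_bound[OF assms(2) x] opnorm_nonneg[OF assms(1)]])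
  finally show "l2norm Q ((S \<circ> T) \<xi>) \<le> opnorm Q S * opnorm Q T * l2norm Q \<xi>" by (simp add: mult.assoc)
next
  show "0 \<le> opnorm Q S * opnorm Q T" by (intro mult_nonneg_nonneg opnorm_nonneg assms)
qed


lemma ideal_unit:
  assumes J: "closed_ideal Q A J"
    and bA: "\<And>T. T \<in> A \<Longrightarrow> bounded_op Q T"
    and IdA: "Iop \<in> A" and Iop: "\<And>\<xi>. Iop \<xi> = (if \<xi> \<in> l2 Q then \<xi> else (\<lambda>_. 0))"
    and j: "j \<in> J" and small: "opnorm Q (op_diff Iop j) \<le> 1/2"
  shows "J = A"
proof -
  have JA: "J \<subseteq> A" and add: "\<And>a b. a \<in> J \<Longrightarrow> b \<in> J \<Longrightarrow> (\<lambda>\<xi> c. a \<xi> c + b \<xi> c) \<in> J"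
    and smul: "\<And>a z. a \<in> J \<Longrightarrow> (\<lambda>\<xi> c. z * a \<xi> c) \<in> J"
    and mulL: "\<And>a b. a \<in> A \<Longrightarrow> b \<in> J \<Longrightarrow> a \<circ> b \<in> J"
    and mulR: "\<And>a b. a \<in> A \<Longrightarrow> b \<in> J \<Longrightarrow> b \<circ> a \<in> J"
    and clo: "\<And>T. T \<in> A \<Longrightarrow> (\<forall>\<epsilon>>0. \<exists>j\<in>J. opnorm Q (op_diff T j) < \<epsilon>) \<Longrightarrow> T \<in> J"
    using J unfolding closed_ideal_def by blast+
  have bId: "bounded_op Q Iop" using bA IdA by blast
  have bj: "bounded_op Q j" using bA JA j by blast
  define y where "y = rec_nat j (\<lambda>_ yn. (\<lambda>\<xi> c. j \<xi> c + yn \<xi> c - (j \<circ> yn) \<xi> c))"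
  have y0: "y 0 = j" and ySuc: "y (Suc n) = (\<lambda>\<xi> c. j \<xi> c + y n \<xi> c - (j \<circ> y n) \<xi> c)" for n
    by (simp_all add: y_def)
  have yJ: "y n \<in> J" for n
  proof (induction n)
    case 0 then show ?case using j y0 by simp
  next
    case (Suc n)
    have "j \<circ> y n \<in> J" using mulL JA j Suc by blast
    then have "(\<lambda>\<xi> c. (-1) * (j \<circ> y n) \<xi> c) \<in> J" by (rule smul)
    then have "(\<lambda>\<xi> c. (\<lambda>\<xi> c. j \<xi> c + y n \<xi> c) \<xi> c + (\<lambda>\<xi> c. (-1) * (j \<circ> y n) \<xi> c) \<xi> c) \<in> J"
      using add[OF add[OF j Suc]] by blast
    then show ?case by (simp add: ySuc)
  qed
  have byn: "bounded_op Q (y n)" for n using yJ JA bA by blast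
  have R: "op_diff Iop (y (Suc n)) = op_diff Iop j \<circ> op_diff Iop (y n)" for n
  proof
    fix \<xi>
    show "op_diff Iop (y (Suc n)) \<xi> = (op_diff Iop j \<circ> op_diff Iop (y n)) \<xi>"
    proof (cases "\<xi> \<in> l2 Q")
      case True
      have yl: "y n \<xi> \<in> l2 Q" using bop_l2[OF byn True] .
      have "j (op_diff Iop (y n) \<xi>) = (\<lambda>c. j \<xi> c - j (y n \<xi>) c)"
        unfolding op_diff_def using True Iop bop_diff[OF bj True yl] by simp
      moreover have "op_diff Iop (y n) \<xi> \<in> l2 Q"
        unfolding op_diff_def using True Iop yl by (simp add: l2_diff)
      ultimately show ?thesis
        using True Iop by (simp add: op_diff_def ySuc fun_eq_iff algebra_simps)
    next
      case False
      have e1: "y n \<xi> = (\<lambda>_. 0)" by (rule bop_off[OF byn False])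
      have e2: "j \<xi> = (\<lambda>_. 0)" by (rule bop_off[OF bj False])
      have e3: "j (\<lambda>_. 0) = (\<lambda>_. 0)" by (rule bop_zero[OF bj])
      have e4: "Iop \<xi> = (\<lambda>_. 0)" "Iop (\<lambda>_. 0) = (\<lambda>_. 0)" using Iop False by auto
      have e5: "op_diff Iop (y n) \<xi> = (\<lambda>_. 0)" by (simp add: op_diff_def e1 e4)
      show ?thesis by (simp add: op_diff_def ySuc e1 e2 e3 e4 e5[unfolded op_diff_def])
    qed
  qed
  have bR: "bounded_op Q (op_diff Iop (y n))" for n by (rule bop_op_diff[OF bId byn])
  have bR0: "bounded_op Q (op_diff Iop j)" by (rule bop_op_diff[OF bId bj])
  have Rn: "opnorm Q (op_diff Iop (y n)) \<le> (1/2) ^ (Suc n)" for n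
  proof (induction n)
    case 0 then show ?case using small y0 by simp
  next
    case (Suc n)
    have "opnorm Q (op_diff Iop (y (Suc n))) \<le> opnorm Q (op_diff Iop j) * opnorm Q (op_diff Iop (y n))"
      unfolding R by (rule opnorm_comp[OF bR0 bR])
    also have "\<dots> \<le> (1/2) * (1/2) ^ Suc n"
      by (intro mult_mono small Suc opnorm_nonneg bR) auto
    finally show ?case by simp
  qed
  have "Iop \<in> J"
  proof (rule clo[OF IdA], intro allI impI)
    fix \<epsilon> :: real assume e: "\<epsilon> > 0"
    obtain n where "(1/2::real) ^ n < \<epsilon>" using real_arch_pow_inv[OF e, of "1/2"] by auto
    moreover have "(1/2::real) ^ Suc n \<le> (1/2) ^ n"
      by (rule power_decreasing) auto
    ultimately have "(1/2::real) ^ Suc n < \<epsilon>" by linarith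
    then show "\<exists>j\<in>J. opnorm Q (op_diff Iop j) < \<epsilon>" using Rn yJ by (meson le_less_trans)
  qed
  moreover have "T = T \<circ> Iop" if "T \<in> A" for T
  proof
    fix \<xi>
    have "bounded_op Q T" using bA that by blast
    then show "T \<xi> = (T \<circ> Iop) \<xi>" using Iop bop_off[of Q T \<xi>] bop_zero[of Q T] by (cases "\<xi> \<in> l2 Q") auto
  qed
  ultimately have "A \<subseteq> J"
  proof (intro subsetI)
    fix T assume IJ: "Iop \<in> J" and eq: "\<And>T. T \<in> A \<Longrightarrow> T = T \<circ> Iop" and T: "T \<in> A"
    have "T \<circ> Iop \<in> J" by (rule mulL[OF T IJ])
    then show "T \<in> J" using eq[OF T] by simp
  qed
  then show ?thesis using JA by blast
qed

lemma infsum_sum_fin: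
  fixes f :: "'s \<Rightarrow> 'a \<Rightarrow> real"
  assumes "finite T" "\<And>s. s \<in> T \<Longrightarrow> f s summable_on Q"
  shows "(\<lambda>c. \<Sum>s\<in>T. f s c) summable_on Q \<and> infsum (\<lambda>c. \<Sum>s\<in>T. f s c) Q = (\<Sum>s\<in>T. infsum (f s) Q)"
  using assms
proof (induction T rule: finite_induct)
  case empty then show ?case by simp
next
  case (insert s T)
  then have IH: "(\<lambda>c. \<Sum>s\<in>T. f s c) summable_on Q" "infsum (\<lambda>c. \<Sum>s\<in>T. f s c) Q = (\<Sum>s\<in>T. infsum (f s) Q)"
    by auto
  have fs: "f s summable_on Q" using insert by auto
  show ?case
    using insert(1,2) summable_on_add[OF fs IH(1)] infsum_add[OF fs IH(1)] IH(2) by simp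
qed

lemma colrow:
  fixes w :: "'s \<Rightarrow> 'a \<Rightarrow> real" and E :: "'s \<Rightarrow> ('a \<Rightarrow> complex) \<Rightarrow> ('a \<Rightarrow> complex)"
  assumes T: "finite T" and x: "\<xi> \<in> l2 Q" and M: "0 \<le> M"
    and El2: "\<And>s \<zeta>. s \<in> T \<Longrightarrow> \<zeta> \<in> l2 Q \<Longrightarrow> E s \<zeta> \<in> l2 Q"
    and En: "\<And>s \<zeta>. s \<in> T \<Longrightarrow> \<zeta> \<in> l2 Q \<Longrightarrow> l2norm Q (E s \<zeta>) \<le> M * l2norm Q \<zeta>"
    and w: "\<And>c. (\<Sum>s\<in>T. (w s c)\<^sup>2) \<le> 1"
  shows "l2norm Q (\<lambda>c. \<Sum>s\<in>T. complex_of_real (w s c) * E s (\<lambda>d. complex_of_real (w s d) * \<xi> d) c)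
           \<le> M * l2norm Q \<xi>"
proof -
  have w1: "\<bar>w s c\<bar> \<le> 1" if "s \<in> T" for s c
  proof -
    have "(w s c)\<^sup>2 \<le> (\<Sum>s\<in>T. (w s c)\<^sup>2)"
      by (rule member_le_sum) (use that T in auto)
    then have "(w s c)\<^sup>2 \<le> 1\<^sup>2" using w[of c] by simp
    then show ?thesis using abs_le_square_iff[of "w s c" 1] by simp
  qed
  define \<zeta> where "\<zeta> s = (\<lambda>d. complex_of_real (w s d) * \<xi> d)" for s
  define \<eta> where "\<eta> s = E s (\<zeta> s)" for s
  have \<zeta>l2: "\<zeta> s \<in> l2 Q" if "s \<in> T" for s
    unfolding \<zeta>_def by (rule l2_mult[OF x, where B=1]) (use w1 that in auto)
  have \<eta>l2: "\<eta> s \<in> l2 Q" if "s \<in> T" for s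
    unfolding \<eta>_def using El2 \<zeta>l2 that by blast
  define v where "v = (\<lambda>c. \<Sum>s\<in>T. complex_of_real (w s c) * \<eta> s c)"
  have vl2: "v \<in> l2 Q"
    unfolding v_def by (rule l2_sum[OF T], rule l2_mult[where B=1]) (use \<eta>l2 w1 in auto)
  have pt: "(cmod (v c))\<^sup>2 \<le> (\<Sum>s\<in>T. (cmod (\<eta> s c))\<^sup>2)" for c
  proof -
    have "cmod (v c) \<le> (\<Sum>s\<in>T. cmod (complex_of_real (w s c) * \<eta> s c))"
      unfolding v_def by (rule norm_sum)
    also have "\<dots> = (\<Sum>s\<in>T. \<bar>w s c\<bar> * \<bar>cmod (\<eta> s c)\<bar>)"
      by (simp add: norm_mult)
    also have "\<dots> \<le> L2_set (\<lambda>s. w s c) T * L2_set (\<lambda>s. cmod (\<eta> s c)) T"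
      by (rule L2_set_mult_ineq)
    also have "\<dots> \<le> 1 * L2_set (\<lambda>s. cmod (\<eta> s c)) T"
      by (rule mult_right_mono) (use w[of c] in \<open>auto simp: L2_set_def intro!: sum_nonneg\<close>)
    finally have "cmod (v c) \<le> L2_set (\<lambda>s. cmod (\<eta> s c)) T" by simp
    then have "(cmod (v c))\<^sup>2 \<le> (L2_set (\<lambda>s. cmod (\<eta> s c)) T)\<^sup>2"
      by (intro power_mono) auto
    also have "\<dots> = (\<Sum>s\<in>T. (cmod (\<eta> s c))\<^sup>2)"
      unfolding L2_set_def by (simp add: sum_nonneg)
    finally show ?thesis .
  qed
  have S1: "(\<lambda>c. \<Sum>s\<in>T. (cmod (\<eta> s c))\<^sup>2) summable_on Q \<and>
      infsum (\<lambda>c. \<Sum>s\<in>T. (cmod (\<eta> s c))\<^sup>2) Q = (\<Sum>s\<in>T. infsum (\<lambda>c. (cmod (\<eta> s c))\<^sup>2) Q)"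
    by (rule infsum_sum_fin[OF T], rule l2_summ, rule \<eta>l2)
  have S2: "(\<lambda>c. \<Sum>s\<in>T. (cmod (\<zeta> s c))\<^sup>2) summable_on Q \<and>
      infsum (\<lambda>c. \<Sum>s\<in>T. (cmod (\<zeta> s c))\<^sup>2) Q = (\<Sum>s\<in>T. infsum (\<lambda>c. (cmod (\<zeta> s c))\<^sup>2) Q)"
    by (rule infsum_sum_fin[OF T], rule l2_summ, rule \<zeta>l2)
  have "(l2norm Q v)\<^sup>2 = infsum (\<lambda>c. (cmod (v c))\<^sup>2) Q" by (rule l2norm_sq)
  also have "\<dots> \<le> infsum (\<lambda>c. \<Sum>s\<in>T. (cmod (\<eta> s c))\<^sup>2) Q"
    by (rule infsum_mono[OF l2_summ[OF vl2]]) (use S1 pt in auto)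
  also have "\<dots> = (\<Sum>s\<in>T. (l2norm Q (\<eta> s))\<^sup>2)"
    using S1 by (simp add: l2norm_sq)
  also have "\<dots> \<le> (\<Sum>s\<in>T. M\<^sup>2 * (l2norm Q (\<zeta> s))\<^sup>2)"
  proof (rule sum_mono)
    fix s assume s: "s \<in> T"
    have "l2norm Q (\<eta> s) \<le> M * l2norm Q (\<zeta> s)" unfolding \<eta>_def using En[OF s \<zeta>l2[OF s]] .
    then have "(l2norm Q (\<eta> s))\<^sup>2 \<le> (M * l2norm Q (\<zeta> s))\<^sup>2" by (intro power_mono) auto
    then show "(l2norm Q (\<eta> s))\<^sup>2 \<le> M\<^sup>2 * (l2norm Q (\<zeta> s))\<^sup>2" by (simp add: power_mult_distrib)
  qed
  also have "\<dots> = M\<^sup>2 * infsum (\<lambda>c. \<Sum>s\<in>T. (cmod (\<zeta> s c))\<^sup>2) Q"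
    using S2 by (simp add: l2norm_sq sum_distrib_left)
  also have "\<dots> \<le> M\<^sup>2 * infsum (\<lambda>c. (cmod (\<xi> c))\<^sup>2) Q"
  proof (rule mult_left_mono)
    show "infsum (\<lambda>c. \<Sum>s\<in>T. (cmod (\<zeta> s c))\<^sup>2) Q \<le> infsum (\<lambda>c. (cmod (\<xi> c))\<^sup>2) Q"
    proof (rule infsum_mono)
      show "(\<lambda>c. \<Sum>s\<in>T. (cmod (\<zeta> s c))\<^sup>2) summable_on Q" using S2 by blast
      show "(\<lambda>c. (cmod (\<xi> c))\<^sup>2) summable_on Q" by (rule l2_summ[OF x])
      fix c
      have "(\<Sum>s\<in>T. (cmod (\<zeta> s c))\<^sup>2) = (\<Sum>s\<in>T. (w s c)\<^sup>2) * (cmod (\<xi> c))\<^sup>2"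
        unfolding \<zeta>_def by (simp add: norm_mult power_mult_distrib sum_distrib_right)
      also have "\<dots> \<le> 1 * (cmod (\<xi> c))\<^sup>2"
        by (rule mult_right_mono[OF w]) simp
      finally show "(\<Sum>s\<in>T. (cmod (\<zeta> s c))\<^sup>2) \<le> (cmod (\<xi> c))\<^sup>2" by simp
    qed
  qed simp
  also have "\<dots> = (M * l2norm Q \<xi>)\<^sup>2" by (simp add: l2norm_sq power_mult_distrib)
  finally have "(l2norm Q v)\<^sup>2 \<le> (M * l2norm Q \<xi>)\<^sup>2" .
  then have "l2norm Q v \<le> M * l2norm Q \<xi>"
    using M by (meson l2norm_nonneg mult_nonneg_nonneg power2_le_imp_le)
  then show ?thesis unfolding v_def \<eta>_def \<zeta>_def .
qed

definition delta :: "'a \<Rightarrow> 'a \<Rightarrow> complex" where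
  "delta d = (\<lambda>e. if e = d then 1 else 0)"

lemma delta_l2: "d \<in> Q \<Longrightarrow> delta d \<in> l2 Q"
proof -
  assume d: "d \<in> Q"
  have "(\<lambda>e. (cmod (delta d e))\<^sup>2) summable_on Q \<longleftrightarrow> (\<lambda>e. (cmod (delta d e))\<^sup>2) summable_on {d}"
    by (rule summable_on_cong_neutral) (auto simp: delta_def d)
  then show ?thesis using d by (auto simp: l2_def delta_def)
qed

lemma delta_norm: "d \<in> Q \<Longrightarrow> l2norm Q (delta d) = 1"
proof -
  assume d: "d \<in> Q"
  have "infsum (\<lambda>e. (cmod (delta d e))\<^sup>2) Q = infsum (\<lambda>e. (cmod (delta d e))\<^sup>2) {d}"
    by (rule infsum_cong_neutral) (auto simp: delta_def d)
  then show ?thesis by (simp add: l2norm_def delta_def)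
qed

lemma exists_delta:
  assumes b: "bounded_op Q T" and x: "\<xi> \<in> l2 Q" and nz: "T \<xi> c \<noteq> 0"
  shows "\<exists>d\<in>Q. T (delta d) c \<noteq> 0"
proof -
  define s where "s = cmod (T \<xi> c)"
  have s: "s > 0" using nz s_def by simp
  define K where "K = opnorm Q T"
  have K: "K \<ge> 0" unfolding K_def by (rule opnorm_nonneg[OF b])
  define \<delta> where "\<delta> = s / (K + 1)"
  have \<delta>: "\<delta> > 0" using s K by (simp add: \<delta>_def)
  have Kd: "K * \<delta> < s"
  proof -
    have "K * \<delta> < (K + 1) * \<delta>" using \<delta> by simp
    also have "\<dots> = s" using K by (simp add: \<delta>_def)
    finally show ?thesis .
  qed
  define f where "f = (\<lambda>e. (cmod (\<xi> e))\<^sup>2)"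
  have fs: "f summable_on Q" unfolding f_def by (rule l2_summ[OF x])
  obtain F where F: "finite F" "F \<subseteq> Q" "dist (sum f F) (infsum f Q) \<le> \<delta>\<^sup>2"
    using infsum_finite_approximation[OF fs, of "\<delta>\<^sup>2"] \<delta> by auto
  define \<rho> where "\<rho> = (\<lambda>e. if e \<in> F then 0 else \<xi> e)"
  define \<xi>F where "\<xi>F = (\<lambda>e. if e \<in> F then \<xi> e else 0)"
  have \<rho>l2: "\<rho> \<in> l2 Q" unfolding \<rho>_def by (rule l2_dom[OF x, where B=1]) auto
  have \<xi>Fl2: "\<xi>F \<in> l2 Q" unfolding \<xi>F_def by (rule l2_dom[OF x, where B=1]) auto
  define g where "g = (\<lambda>e. if e \<in> F then f e else 0)"
  have gs: "g summable_on Q"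
  proof -
    have "g summable_on Q \<longleftrightarrow> g summable_on F"
      by (rule summable_on_cong_neutral) (use F in \<open>auto simp: g_def\<close>)
    then show ?thesis using F by simp
  qed
  have gi: "infsum g Q = sum f F"
  proof -
    have "infsum g Q = infsum g F"
      by (rule infsum_cong_neutral) (use F in \<open>auto simp: g_def\<close>)
    then show ?thesis using F by (simp add: g_def)
  qed
  have "infsum f Q = infsum (\<lambda>e. g e + (cmod (\<rho> e))\<^sup>2) Q"
    by (rule infsum_cong) (auto simp: f_def g_def \<rho>_def)
  also have "\<dots> = infsum g Q + (l2norm Q \<rho>)\<^sup>2"
    by (simp add: infsum_add[OF gs l2_summ[OF \<rho>l2]] l2norm_sq)
  finally have "(l2norm Q \<rho>)\<^sup>2 = infsum f Q - sum f F" using gi by simp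
  also have "\<dots> \<le> \<delta>\<^sup>2" using F(3) by (simp add: dist_real_def)
  finally have "l2norm Q \<rho> \<le> \<delta>" using \<delta> by (meson less_imp_le power2_le_imp_le)
  have "cmod (T \<rho> c) \<le> l2norm Q (T \<rho>)" by (rule l2norm_coord[OF bop_l2[OF b \<rho>l2]])
  also have "\<dots> \<le> K * l2norm Q \<rho>" unfolding K_def by (rule opnorm_bound[OF b \<rho>l2])
  also have "\<dots> \<le> K * \<delta>" using \<open>l2norm Q \<rho> \<le> \<delta>\<close> K by (simp add: mult_left_mono)
  finally have small: "cmod (T \<rho> c) < s" using Kd by linarith
  have "\<xi> = (\<lambda>e. \<xi>F e + \<rho> e)" by (auto simp: \<xi>F_def \<rho>_def)
  then have "T \<xi> = (\<lambda>e. T \<xi>F e + T \<rho> e)" using bop_add[OF b \<xi>Fl2 \<rho>l2] by simp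
  then have "T \<xi>F c \<noteq> 0" using small s_def by auto
  have "\<xi>F = (\<lambda>e. \<Sum>d\<in>F. \<xi> d * delta d e)"
  proof
    fix e
    have "(\<Sum>d\<in>F. \<xi> d * delta d e) = (\<Sum>d\<in>F. if e = d then \<xi> d else 0)"
      by (rule sum.cong) (auto simp: delta_def)
    also have "\<dots> = (if e \<in> F then \<xi> e else 0)" by (rule sum.delta'[OF F(1)])
    finally show "\<xi>F e = (\<Sum>d\<in>F. \<xi> d * delta d e)" by (simp add: \<xi>F_def)
  qed
  moreover have "T (\<lambda>e. \<Sum>d\<in>F. \<xi> d * delta d e) = (\<lambda>e. \<Sum>d\<in>F. T (\<lambda>e. \<xi> d * delta d e) e)"
    by (rule bop_sum[OF b F(1)], rule l2_scale, rule delta_l2) (use F in auto)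
  moreover have "T (\<lambda>e. \<xi> d * delta d e) = (\<lambda>e. \<xi> d * T (delta d) e)" if "d \<in> F" for d
    by (rule bop_scale[OF b delta_l2]) (use F that in auto)
  ultimately have ne: "(\<Sum>d\<in>F. \<xi> d * T (delta d) c) \<noteq> 0" using \<open>T \<xi>F c \<noteq> 0\<close> by simp
  have "\<exists>d\<in>F. T (delta d) c \<noteq> 0"
  proof (rule ccontr)
    assume "\<not> (\<exists>d\<in>F. T (delta d) c \<noteq> 0)"
    then have "\<forall>d\<in>F. T (delta d) c = 0" by blast
    then have "(\<Sum>d\<in>F. \<xi> d * T (delta d) c) = 0" by simp
    then show False using ne by simp
  qed
  then show ?thesis using F by blast
qed

definition shift :: "'g::group_add \<Rightarrow> 'g set \<Rightarrow> 'g set" where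
  "shift g c = (\<lambda>k. g + k) ` c"

lemma shift_0[simp]: "shift 0 c = c"
  by (simp add: shift_def)

lemma shift_shift: "shift g (shift h c) = shift (g + h) c"
  by (simp add: shift_def image_image add.assoc)

lemma shift_inv1[simp]: "shift (-g) (shift g c) = c"
  by (simp add: shift_shift)

lemma shift_inv2[simp]: "shift g (shift (-g) c) = c"
  by (simp add: shift_shift)

lemma shift_lcoset: "shift g (lcoset k H) = lcoset (g + k) H"
  by (simp add: shift_def lcoset_def image_image add.assoc)

lemma lcoset_shift: "lcoset k H = shift k H"
  by (simp add: shift_def lcoset_def)

lemma cont_bdd:
  fixes f :: "'x::topological_space \<Rightarrow> complex"
  assumes "compact (UNIV :: 'x set)" "continuous_on UNIV f"
  shows "\<exists>B. \<forall>y. cmod (f y) \<le> B"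
proof -
  have "compact (f ` UNIV)" by (rule compact_continuous_image[OF assms(2) assms(1)])
  then have "bounded (f ` UNIV)" by (rule compact_imp_bounded)
  then show ?thesis unfolding bounded_iff by auto
qed

locale bnd =
  fixes act :: "'g::group_add \<Rightarrow> 'x::t2_space \<Rightarrow> 'x" and x :: 'x
  assumes ga: "group_action act"
begin

abbreviation "H \<equiv> Gamma0 act x"
abbreviation "Q \<equiv> cosets H"

lemma act0[simp]: "act 0 y = y" using ga by (simp add: group_action_def)
lemma act_add: "act (g + h) y = act g (act h y)" using ga by (simp add: group_action_def)
lemma act_cont: "continuous_on UNIV (act g)" using ga by (simp add: group_action_def)
lemma act_inv1[simp]: "act (-g) (act g y) = y" by (simp add: act_add[symmetric])
lemma act_inv2[simp]: "act g (act (-g) y) = y" by (simp add: act_add[symmetric])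

lemma open_vimage_act: "open U \<Longrightarrow> open (act g -` U)"
  using continuous_on_open_vimage[OF open_UNIV, of "act g"] act_cont by auto

lemma G0_zero: "0 \<in> Gamma0 act y"
  unfolding Gamma0_def by (rule CollectI, rule exI[of _ UNIV]) auto

lemma G0_uminus: "g \<in> Gamma0 act y \<Longrightarrow> - g \<in> Gamma0 act y"
proof -
  assume "g \<in> Gamma0 act y"
  then obtain U where U: "open U" "y \<in> U" "\<forall>z\<in>U. act g z = z" unfolding Gamma0_def by auto
  have "\<forall>z\<in>U. act (-g) z = z"
  proof
    fix z assume "z \<in> U"
    then have "act (-g) z = act (-g) (act g z)" using U by simp
    then show "act (-g) z = z" by simp
  qed
  then show ?thesis using U unfolding Gamma0_def by blast
qed

lemma G0_uminus_iff: "- g \<in> Gamma0 act y \<longleftrightarrow> g \<in> Gamma0 act y"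
  using G0_uminus[of g y] G0_uminus[of "-g" y] by auto

lemma G0_add: "g \<in> Gamma0 act y \<Longrightarrow> h \<in> Gamma0 act y \<Longrightarrow> g + h \<in> Gamma0 act y"
proof -
  assume "g \<in> Gamma0 act y" "h \<in> Gamma0 act y"
  then obtain U V where "open U" "y \<in> U" "\<forall>z\<in>U. act g z = z" "open V" "y \<in> V" "\<forall>z\<in>V. act h z = z"
    unfolding Gamma0_def by auto
  then show ?thesis unfolding Gamma0_def
    by (intro CollectI exI[of _ "U \<inter> V"]) (auto simp: act_add)
qed

lemma G0_fix: "g \<in> Gamma0 act y \<Longrightarrow> act g y = y"
  unfolding Gamma0_def by auto

lemma G0_conj: "g \<in> Gamma0 act (act k y) \<Longrightarrow> -k + g + k \<in> Gamma0 act y"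
proof -
  assume "g \<in> Gamma0 act (act k y)"
  then obtain U where U: "open U" "act k y \<in> U" "\<forall>z\<in>U. act g z = z"
    unfolding Gamma0_def by auto
  have "open (act k -` U)" by (rule open_vimage_act[OF U(1)])
  moreover have "y \<in> act k -` U" using U by auto
  moreover have "\<forall>z\<in>act k -` U. act (-k + g + k) z = z" using U by (auto simp: act_add)
  ultimately show ?thesis unfolding Gamma0_def by blast
qed

lemma lcoset_eqI: "-k + k' \<in> H \<Longrightarrow> lcoset k H = lcoset k' H"
proof -
  assume h: "-k + k' \<in> H"
  have h': "-k' + k \<in> H" using G0_uminus[OF h] by (simp add: minus_add)
  show ?thesis
  proof
    show "lcoset k H \<subseteq> lcoset k' H"
    proof
      fix z assume "z \<in> lcoset k H"
      then obtain a where a: "a \<in> H" "z = k + a" by (auto simp: lcoset_def)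
      have "z = k' + ((-k' + k) + a)" using a by (simp add: add.assoc[symmetric])
      moreover have "(-k' + k) + a \<in> H" by (rule G0_add[OF h' a(1)])
      ultimately show "z \<in> lcoset k' H" by (auto simp: lcoset_def)
    qed
  next
    show "lcoset k' H \<subseteq> lcoset k H"
    proof
      fix z assume "z \<in> lcoset k' H"
      then obtain a where a: "a \<in> H" "z = k' + a" by (auto simp: lcoset_def)
      have "z = k + ((-k + k') + a)" using a by (simp add: add.assoc[symmetric])
      moreover have "(-k + k') + a \<in> H" by (rule G0_add[OF h a(1)])
      ultimately show "z \<in> lcoset k H" by (auto simp: lcoset_def)
    qed
  qed
qed

lemma lcoset_eqD: "lcoset k H = lcoset k' H \<Longrightarrow> -k + k' \<in> H"
proof -
  assume e: "lcoset k H = lcoset k' H"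
  have "k' \<in> lcoset k' H" using G0_zero[of x] by (auto simp: lcoset_def intro!: image_eqI[of _ _ 0])
  then have "k' \<in> lcoset k H" using e by simp
  then obtain a where "a \<in> H" "k' = k + a" by (auto simp: lcoset_def)
  then show ?thesis by (simp add: add.assoc[symmetric])
qed

lemma lcoset_0: "lcoset 0 H = H"
  by (simp add: lcoset_def)

lemma HQ: "H \<in> Q"
proof -
  have "lcoset 0 H \<in> Q" by (simp add: cosets_def)
  then show ?thesis using lcoset_0 by simp
qed

lemma Q_iff: "c \<in> Q \<longleftrightarrow> (\<exists>k. c = lcoset k H)"
  unfolding cosets_def by auto

lemma shift_Q: "c \<in> Q \<Longrightarrow> shift g c \<in> Q"
  unfolding Q_iff by (auto simp: shift_lcoset)

lemma shift_notQ: "c \<notin> Q \<Longrightarrow> shift g c \<notin> Q"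
  using shift_Q[of "shift g c" "-g"] by auto

lemma bij_shift: "bij_betw (shift g) Q Q"
  by (rule bij_betw_byWitness[where f'="shift (-g)"]) (auto intro: shift_Q)

definition pt :: "'g set \<Rightarrow> 'x" where
  "pt c = act (SOME k. c = lcoset k H) x"

lemma pt_lcoset: "pt (lcoset k H) = act k x"
proof -
  define k' where "k' = (SOME k'. lcoset k H = lcoset k' H)"
  have "lcoset k H = lcoset k' H" unfolding k'_def by (rule someI[of _ k]) simp
  then have "-k' + k \<in> H" using lcoset_eqD[of k' k] by simp
  then have f: "act (-k' + k) x = x" by (rule G0_fix)
  have "act k x = act (k' + (-k' + k)) x" by (simp add: add.assoc[symmetric])
  also have "\<dots> = act k' (act (-k' + k) x)" by (rule act_add)
  finally have "act k x = act k' x" using f by simp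
  then show ?thesis unfolding pt_def k'_def by simp
qed

lemma pt_H: "pt H = x"
  using pt_lcoset[of 0] lcoset_0 by simp

lemma pt_shift: "c \<in> Q \<Longrightarrow> pt (shift g c) = act g (pt c)"
  unfolding Q_iff by (auto simp: shift_lcoset pt_lcoset act_add)

lemma shift_fix: "c \<in> Q \<Longrightarrow> g \<in> Gamma0 act (pt c) \<Longrightarrow> shift g c = c"
proof -
  assume "c \<in> Q" "g \<in> Gamma0 act (pt c)"
  then obtain k where k: "c = lcoset k H" by (auto simp: Q_iff)
  have "-g \<in> Gamma0 act (act k x)" using \<open>g \<in> _\<close> k pt_lcoset G0_uminus by simp
  then have "-k + -g + k \<in> H" by (rule G0_conj)
  then have "-(g + k) + k \<in> H" by (simp add: minus_add)
  then have e: "lcoset (g + k) H = lcoset k H" by (rule lcoset_eqI)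
  show ?thesis unfolding k shift_lcoset by (rule e)
qed

lemma shift_H_iff: "shift g H = H \<longleftrightarrow> g \<in> H"
proof
  assume "shift g H = H"
  then have "lcoset g H = lcoset 0 H" using lcoset_0 lcoset_shift[of g H] by simp
  then have "-g + 0 \<in> H" by (rule lcoset_eqD)
  then show "g \<in> H" using G0_uminus_iff by simp
next
  assume "g \<in> H"
  then have "-g + 0 \<in> H" using G0_uminus by simp
  then have "lcoset g H = lcoset 0 H" by (rule lcoset_eqI)
  then show "shift g H = H" using lcoset_0 lcoset_shift[of g H] by simp
qed

lemma qr_eq: "quasi_regular H g \<xi> = (if \<xi> \<in> l2 Q then (\<lambda>c. \<xi> (shift (-g) c)) else (\<lambda>_. 0))"
  by (simp add: quasi_regular_def shift_def)

lemma shift_l2: "\<xi> \<in> l2 Q \<Longrightarrow> (\<lambda>c. \<xi> (shift g c)) \<in> l2 Q"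
proof -
  assume x: "\<xi> \<in> l2 Q"
  have "(\<lambda>c. (cmod (\<xi> (shift g c)))\<^sup>2) summable_on Q"
    using summable_on_reindex_bij_betw[OF bij_shift, of "\<lambda>c. (cmod (\<xi> c))\<^sup>2" g] l2_summ[OF x] by simp
  moreover have "\<xi> (shift g c) = 0" if "c \<notin> Q" for c
    using l2_vanish[OF x shift_notQ[OF that]] .
  ultimately show ?thesis by (auto simp: l2_def)
qed

lemma shift_l2norm: "l2norm Q (\<lambda>c. \<xi> (shift g c)) = l2norm Q \<xi>"
  unfolding l2norm_def
  using infsum_reindex_bij_betw[OF bij_shift, of "\<lambda>c. (cmod (\<xi> c))\<^sup>2" g] by simp

lemma mr_eq: "\<xi> \<in> l2 Q \<Longrightarrow> mult_rep act x H f \<xi> = (\<lambda>c. f (pt c) * \<xi> c)"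
  unfolding mult_rep_def pt_def using l2_vanish by fastforce

definition gen :: "('x \<Rightarrow> complex) \<Rightarrow> 'g \<Rightarrow> 'g set op" where
  "gen f g = (\<lambda>\<xi>. mult_rep act x H f (quasi_regular H g \<xi>))"

lemma gen_eq: "gen f g \<xi> = (if \<xi> \<in> l2 Q then (\<lambda>c. f (pt c) * \<xi> (shift (-g) c)) else (\<lambda>_. 0))"
proof (cases "\<xi> \<in> l2 Q")
  case True
  then show ?thesis unfolding gen_def qr_eq using mr_eq[OF shift_l2[OF True]] by simp
next
  case False
  then show ?thesis unfolding gen_def qr_eq using mr_eq[OF l2_zero] by simp
qed

lemma gen_l2eq: "\<xi> \<in> l2 Q \<Longrightarrow> gen f g \<xi> = (\<lambda>c. f (pt c) * \<xi> (shift (-g) c))"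
  by (simp add: gen_eq)

lemma gen_bop:
  assumes B: "\<And>y. cmod (f y) \<le> B"
  shows "bounded_op Q (gen f g)"
proof (rule bopI[where K=B])
  fix \<xi> :: "'g set \<Rightarrow> complex" assume "\<xi> \<notin> l2 Q" then show "gen f g \<xi> = (\<lambda>_. 0)" by (simp add: gen_eq)
next
  fix \<xi> :: "'g set \<Rightarrow> complex" assume x: "\<xi> \<in> l2 Q" show "gen f g \<xi> \<in> l2 Q"
    unfolding gen_l2eq[OF x] by (rule l2_mult[OF shift_l2[OF x]]) (rule B)
next
  fix \<xi> \<eta> :: "'g set \<Rightarrow> complex" and a assume x: "\<xi> \<in> l2 Q" and y: "\<eta> \<in> l2 Q"
  have "(\<lambda>c. a * \<xi> c + \<eta> c) \<in> l2 Q" by (intro l2_add l2_scale x y)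
  then show "gen f g (\<lambda>c. a * \<xi> c + \<eta> c) = (\<lambda>c. a * gen f g \<xi> c + gen f g \<eta> c)"
    using x y by (simp add: gen_eq algebra_simps)
next
  fix \<xi> :: "'g set \<Rightarrow> complex" assume x: "\<xi> \<in> l2 Q"
  have B0: "0 \<le> B" using B[of x] norm_ge_zero[of "f x"] by linarith
  have "l2norm Q (gen f g \<xi>) \<le> B * l2norm Q (\<lambda>c. \<xi> (shift (-g) c))"
    unfolding gen_l2eq[OF x]
    by (rule l2norm_dom[OF shift_l2[OF x] l2_mult[OF shift_l2[OF x] B] _ B0])
       (simp add: norm_mult mult_right_mono B)
  then show "l2norm Q (gen f g \<xi>) \<le> B * l2norm Q \<xi>" by (simp add: shift_l2norm)
qed

lemma A_bop: "T \<in> crossed_alg act x \<Longrightarrow> bounded_op Q T"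
  unfolding crossed_alg_def Let_def by auto

lemma gen_A:
  assumes "continuous_on UNIV f" "\<And>y. cmod (f y) \<le> B"
  shows "gen f g \<in> crossed_alg act x"
proof -
  have b: "bounded_op Q (gen f g)" by (rule gen_bop[OF assms(2)])
  have G: "gen f g \<in> {(\<lambda>\<xi>. mult_rep act x H f (quasi_regular H g \<xi>)) | f g. continuous_on UNIV f}"
    using assms(1) unfolding gen_def by blast
  have eq: "gen f g = (\<lambda>\<xi> c. \<Sum>i<(1::nat). 1 * (\<lambda>_. gen f g) i \<xi> c)" by simp
  have "gen f g \<in> cspan {(\<lambda>\<xi>. mult_rep act x H f (quasi_regular H g \<xi>)) | f g. continuous_on UNIV f}"
    unfolding cspan_def
    apply (rule CollectI)
    apply (rule exI[of _ 1], rule exI[of _ "\<lambda>_. 1"], rule exI[of _ "\<lambda>_. gen f g"])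
    using G by simp
  then have "\<forall>\<epsilon>>0. \<exists>S\<in>cspan {(\<lambda>\<xi>. mult_rep act x H f (quasi_regular H g \<xi>)) | f g. continuous_on UNIV f}.
      opnorm Q (op_diff (gen f g) S) < \<epsilon>"
    using \<open>gen f g \<in> cspan _\<close> opnorm_zero_diff[of Q "gen f g"]
    by (intro allI impI bexI[of _ "gen f g"]) auto
  then show ?thesis
    unfolding crossed_alg_def Let_def using b by blast
qed

lemma A_approx:
  assumes "T \<in> crossed_alg act x" "\<epsilon> > 0"
  shows "\<exists>(n::nat) \<alpha> fs gs. (\<forall>i<n. continuous_on UNIV (fs i)) \<and>
            opnorm Q (op_diff T (\<lambda>\<xi> c. \<Sum>i<n. \<alpha> i * gen (fs i) (gs i) \<xi> c)) < \<epsilon>"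
proof -
  obtain S where S: "S \<in> cspan {(\<lambda>\<xi>. mult_rep act x H f (quasi_regular H g \<xi>)) | f g. continuous_on UNIV f}"
    "opnorm Q (op_diff T S) < \<epsilon>"
    using assms unfolding crossed_alg_def Let_def by auto
  from S(1) have "\<exists>(n::nat) a T'. (\<forall>i<n. T' i \<in> {(\<lambda>\<xi>. mult_rep act x H f (quasi_regular H g \<xi>)) | f g. continuous_on UNIV f}) \<and>
    S = (\<lambda>\<xi> c. \<Sum>i<n. a i * T' i \<xi> c)"
    unfolding cspan_def by (rule CollectD)
  then obtain n :: nat and a T' where nT: "\<forall>i<n. T' i \<in> {(\<lambda>\<xi>. mult_rep act x H f (quasi_regular H g \<xi>)) | f g. continuous_on UNIV f}"
    "S = (\<lambda>\<xi> c. \<Sum>i<n. a i * T' i \<xi> c)"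
    by blast
  have "\<forall>i. \<exists>p. i < n \<longrightarrow> continuous_on UNIV (fst p) \<and> T' i = gen (fst p) (snd p)"
  proof
    fix i show "\<exists>p. i < n \<longrightarrow> continuous_on UNIV (fst p) \<and> T' i = gen (fst p) (snd p)"
    proof (cases "i < n")
      case True
      then obtain f g where "T' i = (\<lambda>\<xi>. mult_rep act x H f (quasi_regular H g \<xi>))" "continuous_on UNIV f"
        using nT(1) by blast
      then show ?thesis unfolding gen_def by (intro exI[of _ "(f, g)"]) simp
    qed simp
  qed
  then have "\<exists>p. \<forall>i. i < n \<longrightarrow> continuous_on UNIV (fst (p i)) \<and> T' i = gen (fst (p i)) (snd (p i))"
    by (rule choice)
  then obtain p where p: "\<And>i. i < n \<Longrightarrow> continuous_on UNIV (fst (p i)) \<and> T' i = gen (fst (p i)) (snd (p i))"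
    by blast
  have "S = (\<lambda>\<xi> c. \<Sum>i<n. a i * gen (fst (p i)) (snd (p i)) \<xi> c)"
    unfolding nT(2) using p by (intro ext sum.cong) auto
  then show ?thesis using S(2) p by (intro exI[of _ n] exI[of _ a] exI[of _ "\<lambda>i. fst (p i)"] exI[of _ "\<lambda>i. snd (p i)"]) auto
qed

end

lemma urysohn_bump:
  fixes z :: "'x::t2_space"
  assumes cpt: "compact (UNIV::'x set)" and W: "open W" "z \<in> W"
  obtains h0 :: "'x \<Rightarrow> real" where "continuous_on UNIV h0" "\<And>y. 0 \<le> h0 y" "\<And>y. h0 y \<le> 1"
    "h0 z = 1" "\<And>y. y \<notin> W \<Longrightarrow> h0 y = 0"
proof -
  have cs: "compact_space (euclidean::'x topology)" using cpt by (simp add: compact_space_def)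
  have hs: "Hausdorff_space (euclidean::'x topology)"
    unfolding Hausdorff_space_def disjnt_def using hausdorff by auto
  have ns: "normal_space (euclidean::'x topology)"
    by (rule compact_Hausdorff_or_regular_imp_normal_space) (use cs hs in auto)
  have c1: "closedin euclidean (- W)" using W(1) by (simp add: closed_Compl)
  have c2: "closedin euclidean {z}" by simp
  have d: "disjnt (- W) {z}" using W(2) by (auto simp: disjnt_def)
  obtain f where f: "continuous_map euclidean (top_of_set {0..1::real}) f" "f ` (- W) \<subseteq> {0}" "f ` {z} \<subseteq> {1}"
    using Urysohn_lemma[OF ns c1 c2 d, of 0 1] by auto
  have "continuous_map euclidean euclidean f" "f \<in> UNIV \<rightarrow> {0..1}"
    using f(1) unfolding continuous_map_in_subtopology by auto
  then have "continuous_on UNIV f" "\<And>y. 0 \<le> f y" "\<And>y. f y \<le> 1" by auto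
  moreover have "f z = 1" using f(3) by auto
  moreover have "\<And>y. y \<notin> W \<Longrightarrow> f y = 0" using f(2) by auto
  ultimately show ?thesis using that by blast
qed

context bnd
begin

lemma gen_norm:
  assumes x: "\<xi> \<in> l2 Q" and B: "\<And>y. cmod (f y) \<le> B"
  shows "l2norm Q (gen f g \<xi>) \<le> B * l2norm Q \<xi>"
proof -
  have B0: "0 \<le> B" using B[of x] norm_ge_zero[of "f x"] by linarith
  have "l2norm Q (gen f g \<xi>) \<le> B * l2norm Q (\<lambda>c. \<xi> (shift (-g) c))"
    unfolding gen_l2eq[OF x]
    by (rule l2norm_dom[OF shift_l2[OF x] l2_mult[OF shift_l2[OF x] B] _ B0])
       (simp add: norm_mult mult_right_mono B)
  then show ?thesis by (simp add: shift_l2norm)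
qed

lemma avoid_fix:
  assumes "finite I" "open V0" "V0 \<noteq> {}" "\<forall>g\<in>I. \<forall>y\<in>V0. g \<notin> Gamma0 act y"
  shows "\<exists>V. open V \<and> V \<noteq> {} \<and> V \<subseteq> V0 \<and> (\<forall>g\<in>I. \<forall>y\<in>V. act g y \<noteq> y)"
  using assms
proof (induction I rule: finite_induct)
  case empty then show ?case by blast
next
  case (insert g I)
  then obtain V where V: "open V" "V \<noteq> {}" "V \<subseteq> V0" "\<forall>g\<in>I. \<forall>y\<in>V. act g y \<noteq> y" by auto
  define V' where "V' = V - {y. act g y = y}"
  have "closed {y. act g y = y}" by (rule closed_Collect_eq[OF act_cont continuous_on_id])
  then have "open V'" unfolding V'_def using V(1) by (rule open_Diff[rotated])
  have "V' \<noteq> {}"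
  proof
    assume "V' = {}"
    then have fx: "\<forall>y\<in>V. act g y = y" unfolding V'_def by auto
    obtain y where y: "y \<in> V" using V(2) by auto
    then have "g \<in> Gamma0 act y" unfolding Gamma0_def using V(1) fx by blast
    moreover have "y \<in> V0" using V(3) y by auto
    ultimately show False using insert.prems(3) by auto
  qed
  moreover have "V' \<subseteq> V0" using V(3) unfolding V'_def by auto
  moreover have "\<forall>h\<in>insert g I. \<forall>y\<in>V'. act h y \<noteq> y" using V(4) unfolding V'_def by auto
  ultimately show ?case using \<open>open V'\<close> by blast
qed

end

locale bnd2 = bnd act x for act :: "'g::group_add \<Rightarrow> 'x::t2_space \<Rightarrow> 'x" and x +
  assumes minimal: "minimal_action act" and cpt: "compact (UNIV::'x set)" and xX: "x \<in> X00 act"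
begin

abbreviation "A \<equiv> crossed_alg act x"

lemma cover:
  assumes "open W'" "W' \<noteq> {}"
  shows "\<exists>Ts. finite Ts \<and> (\<forall>y. \<exists>s\<in>Ts. act s y \<in> W')"
proof -
  have ex: "\<exists>s. act s y \<in> W'" for y
  proof -
    have "closure (range (\<lambda>g. act g y)) = UNIV" using minimal by (simp add: minimal_action_def)
    then have "W' \<inter> closure (range (\<lambda>g. act g y)) \<noteq> {}" using assms(2) by simp
    then have "W' \<inter> range (\<lambda>g. act g y) \<noteq> {}" using open_Int_closure_eq_empty[OF assms(1)] by blast
    then show ?thesis by blast
  qed
  have "UNIV \<subseteq> (\<Union>s\<in>UNIV. act s -` W')" using ex by blast
  then obtain C where "C \<subseteq> UNIV" "finite C" "UNIV \<subseteq> (\<Union>s\<in>C. act s -` W')"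
    using compactE_image[OF cpt, of UNIV "\<lambda>s. act s -` W'"] open_vimage_act[OF assms(1)] by metis
  then show ?thesis by blast
qed

lemma partition:
  fixes \<rho> :: "'x \<Rightarrow> real"
  assumes \<rho>c: "continuous_on UNIV \<rho>" and \<rho>01: "\<And>y. 0 \<le> \<rho> y" "\<And>y. \<rho> y \<le> 1"
    and Ts: "finite Ts" and cov: "\<And>y. \<exists>s\<in>Ts. \<rho> (act s y) = 1"
  defines "u \<equiv> (\<lambda>s y. \<rho> (act s y) / sqrt (\<Sum>s'\<in>Ts. (\<rho> (act s' y))\<^sup>2))"
  shows "\<And>s. continuous_on UNIV (u s)" "\<And>y. (\<Sum>s\<in>Ts. (u s y)\<^sup>2) = 1"
    "\<And>s y. u s y \<noteq> 0 \<Longrightarrow> \<rho> (act s y) \<noteq> 0" "\<And>s y. 0 \<le> u s y"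
proof -
  define \<sigma> where "\<sigma> y = (\<Sum>s'\<in>Ts. (\<rho> (act s' y))\<^sup>2)" for y
  have \<sigma>1: "1 \<le> \<sigma> y" for y
  proof -
    obtain s where s: "s \<in> Ts" "\<rho> (act s y) = 1" using cov by blast
    have "(\<rho> (act s y))\<^sup>2 \<le> \<sigma> y" unfolding \<sigma>_def by (rule member_le_sum) (use s Ts in auto)
    then show ?thesis using s by simp
  qed
  have rc: "continuous_on UNIV (\<lambda>y. \<rho> (act s y))" for s
    by (rule continuous_on_compose2[OF \<rho>c act_cont]) auto
  have \<sigma>nz: "\<sigma> y \<noteq> 0" for y using \<sigma>1[of y] by linarith
  have \<sigma>c: "continuous_on UNIV \<sigma>" unfolding \<sigma>_def by (intro continuous_intros rc)
  show "continuous_on UNIV (u s)" for s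
    unfolding u_def \<sigma>_def[symmetric]
    by (intro continuous_intros rc \<sigma>c) (use \<sigma>nz in \<open>auto\<close>)
  show "(\<Sum>s\<in>Ts. (u s y)\<^sup>2) = 1" for y
  proof -
    have s0: "0 \<le> \<sigma> y" using \<sigma>1[of y] by simp
    have "(\<Sum>s\<in>Ts. (u s y)\<^sup>2) = (\<Sum>s\<in>Ts. (\<rho> (act s y))\<^sup>2 / \<sigma> y)"
      unfolding u_def \<sigma>_def[symmetric] by (simp add: power_divide s0)
    also have "\<dots> = \<sigma> y / \<sigma> y" by (simp add: sum_divide_distrib[symmetric] \<sigma>_def)
    also have "\<dots> = 1" using \<sigma>1[of y] by simp
    finally show ?thesis .
  qed
  show "u s y \<noteq> 0 \<Longrightarrow> \<rho> (act s y) \<noteq> 0" for s y unfolding u_def by auto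
  show "0 \<le> u s y" for s y unfolding u_def using \<rho>01(1)[of "act s y"]
    by (intro divide_nonneg_nonneg) (auto intro: sum_nonneg)
qed

end

lemma urysohn_ex:
  fixes z :: "'x::t2_space"
  assumes cpt: "compact (UNIV::'x set)" and W: "open W" "z \<in> W"
  shows "\<exists>h0 :: 'x \<Rightarrow> real. continuous_on UNIV h0 \<and> (\<forall>y. 0 \<le> h0 y) \<and> (\<forall>y. h0 y \<le> 1) \<and>
    h0 z = 1 \<and> (\<forall>y. y \<notin> W \<longrightarrow> h0 y = 0)"
proof -
  have cs: "compact_space (euclidean::'x topology)" using cpt by (simp add: compact_space_def)
  have hs: "Hausdorff_space (euclidean::'x topology)"
    unfolding Hausdorff_space_def disjnt_def using hausdorff by auto
  have ns: "normal_space (euclidean::'x topology)"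
    by (rule compact_Hausdorff_or_regular_imp_normal_space) (use cs hs in auto)
  have c1: "closedin euclidean (- W)" using W(1) by (simp add: closed_Compl)
  have c2: "closedin euclidean {z}" by simp
  have d: "disjnt (- W) {z}" using W(2) by (auto simp: disjnt_def)
  obtain f where f: "continuous_map euclidean (top_of_set {0..1::real}) f" "f ` (- W) \<subseteq> {0}" "f ` {z} \<subseteq> {1}"
    using Urysohn_lemma[OF ns c1 c2 d, of 0 1] by auto
  have "continuous_map euclidean euclidean f" "f \<in> UNIV \<rightarrow> {0..1}"
    using f(1) unfolding continuous_map_in_subtopology by auto
  then have "continuous_on UNIV f" "\<forall>y. 0 \<le> f y" "\<forall>y. f y \<le> 1" by auto
  moreover have "f z = 1" using f(3) by auto
  moreover have "\<forall>y. y \<notin> W \<longrightarrow> f y = 0" using f(2) by auto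
  ultimately show ?thesis by blast
qed

context bnd2
begin

lemma main_ideal:
  assumes J: "closed_ideal Q A J" and nz: "J \<noteq> {zero_op}"
  shows "J = A"
proof -
  have JA: "J \<subseteq> A" and zJ: "zero_op \<in> J"
    and addJ: "\<And>a b. a \<in> J \<Longrightarrow> b \<in> J \<Longrightarrow> (\<lambda>\<xi> c. a \<xi> c + b \<xi> c) \<in> J"
    and mulJ: "\<And>a j. a \<in> A \<Longrightarrow> j \<in> J \<Longrightarrow> a \<circ> j \<in> J \<and> j \<circ> a \<in> J"
    using J unfolding closed_ideal_def by blast+
  have mL: "\<And>a j. a \<in> A \<Longrightarrow> j \<in> J \<Longrightarrow> a \<circ> j \<in> J" and mR: "\<And>a j. a \<in> A \<Longrightarrow> j \<in> J \<Longrightarrow> j \<circ> a \<in> J"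
    using mulJ by blast+
  obtain a where a: "a \<in> J" "a \<noteq> zero_op" using nz zJ by blast
  have ba: "bounded_op Q a" using a JA A_bop by blast
  have "\<exists>\<xi> c. a \<xi> c \<noteq> 0"
  proof (rule ccontr)
    assume "\<not> (\<exists>\<xi> c. a \<xi> c \<noteq> 0)"
    then have "a = zero_op" by (auto simp: zero_op_def fun_eq_iff)
    then show False using a(2) by simp
  qed
  then obtain \<xi>0 c where \<xi>0: "a \<xi>0 c \<noteq> 0" by blast
  have \<xi>0l: "\<xi>0 \<in> l2 Q"
  proof (rule ccontr)
    assume "\<xi>0 \<notin> l2 Q"
    then have "a \<xi>0 = (\<lambda>_. 0)" by (rule bop_off[OF ba])
    then show False using \<xi>0 by simp
  qed
  obtain d where d: "d \<in> Q" "a (delta d) c \<noteq> 0" using exists_delta[OF ba \<xi>0l \<xi>0] by blast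
  have cQ: "c \<in> Q"
  proof (rule ccontr)
    assume "c \<notin> Q"
    then have "a (delta d) c = 0" by (rule l2_vanish[OF bop_l2[OF ba delta_l2[OF d(1)]]])
    then show False using d(2) by simp
  qed
  obtain r where r: "c = lcoset r H" using cQ Q_iff by auto
  obtain t where t: "d = lcoset t H" using d(1) Q_iff by auto
  define one where "one = (\<lambda>_::'x. 1::complex)"
  have one_c: "continuous_on UNIV one" and one_b: "\<And>y. cmod (one y) \<le> 1" by (auto simp: one_def)
  define a' where "a' = gen one (-r) \<circ> (a \<circ> gen one t)"
  have a'J: "a' \<in> J" unfolding a'_def
    by (rule mL[OF gen_A[OF one_c one_b] mR[OF gen_A[OF one_c one_b] a(1)]])
  have a'A: "a' \<in> A" using a'J JA by blast
  have ba': "bounded_op Q a'" using A_bop a'A by blast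
  have dH: "delta H \<in> l2 Q" by (rule delta_l2[OF HQ])
  have g1: "gen one t (delta H) = delta d"
  proof
    fix e
    have "gen one t (delta H) e = delta H (shift (-t) e)" by (simp add: gen_l2eq[OF dH] one_def)
    also have "\<dots> = delta d e"
    proof -
      have "shift (-t) e = H \<longleftrightarrow> e = d"
      proof
        assume "shift (-t) e = H"
        then have "shift t (shift (-t) e) = shift t H" by simp
        then show "e = d" using t lcoset_shift[of t H] by simp
      next
        assume "e = d" then show "shift (-t) e = H" using t lcoset_shift[of t H] by simp
      qed
      then show ?thesis by (simp add: delta_def)
    qed
    finally show "gen one t (delta H) e = delta d e" .
  qed
  define \<gamma> where "\<gamma> = a' (delta H) H"
  have \<gamma>_eq: "\<gamma> = a (delta d) c"
  proof -
    have l: "a (delta d) \<in> l2 Q" by (rule bop_l2[OF ba delta_l2[OF d(1)]])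
    have "\<gamma> = gen one (-r) (a (delta d)) H" unfolding \<gamma>_def a'_def by (simp add: g1)
    also have "\<dots> = a (delta d) (shift r H)" by (simp add: gen_l2eq[OF l] one_def)
    also have "shift r H = c" using r lcoset_shift[of r H] by simp
    finally show ?thesis .
  qed
  have \<gamma>0: "\<gamma> \<noteq> 0" using \<gamma>_eq d(2) by simp
  define \<epsilon> where "\<epsilon> = cmod \<gamma> / 8"
  have \<epsilon>: "\<epsilon> > 0" using \<gamma>0 by (simp add: \<epsilon>_def)
  obtain n :: nat and \<alpha> fs gs where fs: "\<forall>i<n. continuous_on UNIV (fs i)"
    and Sap: "opnorm Q (op_diff a' (\<lambda>\<xi> c. \<Sum>i<n. \<alpha> i * gen (fs i) (gs i) \<xi> c)) < \<epsilon>"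
    using A_approx[OF a'A \<epsilon>] by blast
  define S where "S = (\<lambda>\<xi> c. \<Sum>i<n. \<alpha> i * gen (fs i) (gs i) \<xi> c)"
  have "\<forall>i. \<exists>B. i < n \<longrightarrow> (\<forall>y. cmod (fs i y) \<le> B)"
    using fs cont_bdd[OF cpt] by blast
  then have "\<exists>Bf. \<forall>i. i < n \<longrightarrow> (\<forall>y. cmod (fs i y) \<le> Bf i)" by (rule choice)
  then obtain Bf where Bf: "\<And>i y. i < n \<Longrightarrow> cmod (fs i y) \<le> Bf i" by blast
  have bS: "bounded_op Q S" unfolding S_def
    by (rule bop_cspan, rule gen_bop, erule Bf)
  define D where "D = op_diff a' S"
  have bD: "bounded_op Q D" unfolding D_def by (rule bop_op_diff[OF ba' bS])
  have Dsmall: "opnorm Q D < \<epsilon>" using Sap unfolding D_def S_def .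
  define IH where "IH = {i \<in> {..<n}. gs i \<in> H}"
  define F where "F = (\<lambda>y. \<Sum>i\<in>IH. \<alpha> i * fs i y)"
  have F_c: "continuous_on UNIV F" unfolding F_def
    by (intro continuous_intros) (use fs in \<open>auto simp: IH_def\<close>)
  have SH: "S (delta H) H = F x"
  proof -
    have "S (delta H) H = (\<Sum>i<n. \<alpha> i * (fs i x * delta H (shift (-gs i) H)))"
      unfolding S_def by (simp add: gen_l2eq[OF dH] pt_H)
    also have "\<dots> = (\<Sum>i<n. if gs i \<in> H then \<alpha> i * fs i x else 0)"
      by (rule sum.cong) (auto simp: delta_def shift_H_iff G0_uminus_iff)
    also have "\<dots> = F x" unfolding F_def IH_def by (rule sum.inter_filter[symmetric]) simp
    finally show ?thesis .
  qed
  have \<gamma>F: "cmod (\<gamma> - F x) < \<epsilon>"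
  proof -
    have "\<gamma> - F x = D (delta H) H" unfolding \<gamma>_def D_def op_diff_def using SH by simp
    then have "cmod (\<gamma> - F x) \<le> l2norm Q (D (delta H))"
      using l2norm_coord[OF bop_l2[OF bD dH]] by simp
    also have "\<dots> \<le> opnorm Q D * l2norm Q (delta H)" by (rule opnorm_bound[OF bD dH])
    also have "\<dots> = opnorm Q D" using delta_norm[OF HQ] by simp
    finally show ?thesis using Dsmall by linarith
  qed
  define \<beta> where "\<beta> = cmod \<gamma> / 4"
  have \<beta>: "\<beta> > 0" using \<gamma>0 by (simp add: \<beta>_def)
  have Fx: "\<beta> < cmod (F x)"
  proof -
    have "cmod \<gamma> \<le> cmod (F x) + cmod (\<gamma> - F x)" by (rule norm_triangle_sub)
    moreover have d: "cmod (\<gamma> - F x) < cmod \<gamma> / 8" using \<gamma>F by (simp add: \<epsilon>_def)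
    moreover have g0: "cmod \<gamma> > 0" using \<gamma>0 by simp
    ultimately have "cmod \<gamma> / 4 < cmod (F x)" by linarith
    then show ?thesis by (simp add: \<beta>_def)
  qed

  define Gs where "Gs = gs ` {..<n}"
  have finGs: "finite Gs" by (simp add: Gs_def)
  define PU where "PU g U \<longleftrightarrow> open U \<and> x \<in> U \<and> (\<forall>y\<in>U. (-g \<in> Gamma0 act y \<longleftrightarrow> -g \<in> H))" for g U
  have X0: "\<forall>g. \<exists>U. open U \<and> x \<in> U \<and> (\<forall>y\<in>U. (g \<in> Gamma0 act y \<longleftrightarrow> g \<in> Gamma0 act x))"
    using xX unfolding X00_def by (rule CollectD)
  have "\<forall>g\<in>Gs. \<exists>U. PU g U"
  proof
    fix g assume "g \<in> Gs"
    show "\<exists>U. PU g U" unfolding PU_def by (rule spec[OF X0, of "-g"])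
  qed
  from bchoice[OF this] obtain Ug where UgP: "\<forall>g\<in>Gs. PU g (Ug g)" by blast
  have Ug: "open (Ug g)" "x \<in> Ug g" "\<forall>y\<in>Ug g. (-g \<in> Gamma0 act y \<longleftrightarrow> -g \<in> H)" if "g \<in> Gs" for g
  proof -
    have "PU g (Ug g)" using UgP that by blast
    then have P: "open (Ug g) \<and> x \<in> Ug g \<and> (\<forall>y\<in>Ug g. (-g \<in> Gamma0 act y \<longleftrightarrow> -g \<in> H))"
      unfolding PU_def .
    then show "open (Ug g)" "x \<in> Ug g" "\<forall>y\<in>Ug g. (-g \<in> Gamma0 act y \<longleftrightarrow> -g \<in> H)"
      by (rule conjunct1, rule conjunct1[OF conjunct2], rule conjunct2[OF conjunct2])
  qed
  define U1 where "U1 = (\<Inter>g\<in>Gs. Ug g) \<inter> {y. \<beta> < cmod (F y)}"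
  have oU1: "open U1" unfolding U1_def
  proof (rule open_Int)
    show "open (\<Inter>g\<in>Gs. Ug g)" using finGs Ug(1) by (intro open_INT) auto
    show "open {y. \<beta> < cmod (F y)}"
      by (rule open_Collect_less[OF continuous_on_const continuous_on_norm[OF F_c]])
  qed
  have xU1: "x \<in> U1" using Ug(2) Fx by (auto simp: U1_def)
  define I where "I = uminus ` {g\<in>Gs. g \<notin> H}"
  have "\<exists>V. open V \<and> V \<noteq> {} \<and> V \<subseteq> U1 \<and> (\<forall>g\<in>I. \<forall>y\<in>V. act g y \<noteq> y)"
  proof (rule avoid_fix)
    show "finite I" using finGs by (simp add: I_def)
    show "open U1" "U1 \<noteq> {}" using oU1 xU1 by auto
    show "\<forall>g\<in>I. \<forall>y\<in>U1. g \<notin> Gamma0 act y"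
    proof (intro ballI)
      fix g' y assume g': "g' \<in> I" and y: "y \<in> U1"
      then obtain g where g: "g \<in> Gs" "g \<notin> H" "g' = -g" by (auto simp: I_def)
      have "y \<in> Ug g" using y g(1) by (auto simp: U1_def)
      then show "g' \<notin> Gamma0 act y" using bspec[OF Ug(3)[OF g(1)]] g G0_uminus_iff by auto
    qed
  qed
  then obtain V where V: "open V" "V \<noteq> {}" "V \<subseteq> U1" "\<forall>g\<in>I. \<forall>y\<in>V. act g y \<noteq> y" by blast
  obtain z where zV: "z \<in> V" using V(2) by auto
  define PO where "PO g Om \<longleftrightarrow> open Om \<and> z \<in> Om \<and> (g \<in> H \<longrightarrow> (\<forall>y\<in>Om. act (-g) y = y)) \<and>
                   (g \<notin> H \<longrightarrow> (\<forall>y\<in>Om. act (-g) y \<notin> Om))" for g Om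
  have "\<forall>g\<in>Gs. \<exists>Om. PO g Om"
  proof
    fix g assume g: "g \<in> Gs"
    show "\<exists>Om. PO g Om"
    proof (cases "g \<in> H")
      case True
      have "z \<in> Ug g" using zV V(3) g by (auto simp: U1_def)
      then have "-g \<in> Gamma0 act z" using bspec[OF Ug(3)[OF g]] True G0_uminus_iff by auto
      then obtain Om where "open Om" "z \<in> Om" "\<forall>y\<in>Om. act (-g) y = y" unfolding Gamma0_def by auto
      then have "PO g Om" using True unfolding PO_def by auto
      then show ?thesis by blast
    next
      case False
      have "-g \<in> I" using g False by (auto simp: I_def)
      then have ne: "act (-g) z \<noteq> z" using V(4) zV by blast
      obtain A1 B1 where AB: "open A1" "open B1" "z \<in> A1" "act (-g) z \<in> B1" "A1 \<inter> B1 = {}"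
        using hausdorff[OF ne[symmetric]] by blast
      define Om where "Om = A1 \<inter> act (-g) -` B1"
      have "open Om" unfolding Om_def using AB by (intro open_Int open_vimage_act) auto
      moreover have "z \<in> Om" using AB by (auto simp: Om_def)
      moreover have "\<forall>y\<in>Om. act (-g) y \<notin> Om" using AB by (auto simp: Om_def)
      ultimately have "PO g Om" using False unfolding PO_def by auto
      then show ?thesis by blast
    qed
  qed
  from bchoice[OF this] obtain Og where OgP: "\<forall>g\<in>Gs. PO g (Og g)" by blast
  have Og: "open (Og g)" "z \<in> Og g" "g \<in> H \<Longrightarrow> (\<forall>y\<in>Og g. act (-g) y = y)"
     "g \<notin> H \<Longrightarrow> (\<forall>y\<in>Og g. act (-g) y \<notin> Og g)" if "g \<in> Gs" for g
  proof -
    have "PO g (Og g)" using OgP that by blast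
    then have P: "open (Og g) \<and> z \<in> Og g \<and> (g \<in> H \<longrightarrow> (\<forall>y\<in>Og g. act (-g) y = y)) \<and>
                   (g \<notin> H \<longrightarrow> (\<forall>y\<in>Og g. act (-g) y \<notin> Og g))"
      unfolding PO_def .
    then show "open (Og g)" "z \<in> Og g" "g \<in> H \<Longrightarrow> (\<forall>y\<in>Og g. act (-g) y = y)"
     "g \<notin> H \<Longrightarrow> (\<forall>y\<in>Og g. act (-g) y \<notin> Og g)"
      by blast+
  qed
  define W where "W = V \<inter> (\<Inter>g\<in>Gs. Og g)"
  have oW: "open W" unfolding W_def using V(1) Og(1) finGs by (intro open_Int open_INT) auto
  have zW: "z \<in> W" using zV Og(2) by (auto simp: W_def)
  have WF: "\<And>y. y \<in> W \<Longrightarrow> \<beta> < cmod (F y)" using V(3) by (auto simp: W_def U1_def)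
  have Wfix: "-g \<in> Gamma0 act y" if g: "g \<in> Gs" "g \<in> H" and y: "y \<in> W" for g y
  proof -
    have "\<forall>y'\<in>W. act (-g) y' = y'" using Og(3)[OF g(1) g(2)] g by (auto simp: W_def)
    then show "-g \<in> Gamma0 act y" unfolding Gamma0_def using oW y by blast
  qed
  have Wmove: "act (-g) y \<notin> W" if g: "g \<in> Gs" "g \<notin> H" and y: "y \<in> W" for g y
  proof -
    have "y \<in> Og g" using g y by (auto simp: W_def)
    then have "act (-g) y \<notin> Og g" using Og(4)[OF g(1) g(2)] by blast
    then show "act (-g) y \<notin> W" using g(1) by (auto simp: W_def)
  qed

  obtain h0 :: "'x \<Rightarrow> real" where h0all: "continuous_on UNIV h0 \<and> (\<forall>y. 0 \<le> h0 y) \<and> (\<forall>y. h0 y \<le> 1) \<and>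
    h0 z = 1 \<and> (\<forall>y. y \<notin> W \<longrightarrow> h0 y = 0)"
    using urysohn_ex[OF cpt oW zW] by blast
  have h0: "continuous_on UNIV h0" "\<And>y. 0 \<le> h0 y" "\<And>y. h0 y \<le> 1" "h0 z = 1"
      "\<And>y. y \<notin> W \<Longrightarrow> h0 y = 0"
    using h0all by simp_all
  define h where "h = (\<lambda>y. min 1 (3 * h0 y))"
  define \<psi> where "\<psi> = (\<lambda>y. (h y)\<^sup>2)"
  define \<rho> where "\<rho> = (\<lambda>y. min 1 (max 0 (3 * h0 y - 1)))"
  define W' where "W' = {y. 2/3 < h0 y}"
  have h0c3: "continuous_on UNIV (\<lambda>y. 3 * h0 y)" by (rule continuous_on_mult[OF continuous_on_const h0(1)])
  have h_c: "continuous_on UNIV h" unfolding h_def by (rule continuous_on_min[OF continuous_on_const h0c3])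
  have \<rho>_c: "continuous_on UNIV \<rho>" unfolding \<rho>_def
    by (rule continuous_on_min[OF continuous_on_const continuous_on_max[OF continuous_on_const continuous_on_diff[OF h0c3 continuous_on_const]]])
  have h01: "0 \<le> h y" "h y \<le> 1" for y using h0(2)[of y] by (simp_all add: h_def)
  have hW: "y \<in> W" if "h y \<noteq> 0" for y
  proof (rule ccontr)
    assume "y \<notin> W"
    then have "h0 y = 0" by (rule h0(5))
    then show False using that by (simp add: h_def)
  qed
  have \<rho>01: "0 \<le> \<rho> y" "\<rho> y \<le> 1" for y by (simp_all add: \<rho>_def)
  have \<rho>\<psi>: "\<psi> y = 1" if "\<rho> y \<noteq> 0" for y
  proof -
    have "3 * h0 y - 1 > 0"
    proof (rule ccontr)
      assume "\<not> 3 * h0 y - 1 > 0"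
      then have "max 0 (3 * h0 y - 1) = 0" by simp
      then show False using that by (simp add: \<rho>_def)
    qed
    then have "1 \<le> 3 * h0 y" by simp
    then have "h y = 1" by (simp add: h_def)
    then show ?thesis by (simp add: \<psi>_def)
  qed
  have \<rho>W': "\<rho> y = 1" if "y \<in> W'" for y
  proof -
    have "1 \<le> 3 * h0 y - 1" using that by (simp add: W'_def)
    then have "max 0 (3 * h0 y - 1) = 3 * h0 y - 1" "1 \<le> max 0 (3 * h0 y - 1)" by simp_all
    then show ?thesis by (simp add: \<rho>_def)
  qed
  have oW': "open W'" unfolding W'_def by (rule open_Collect_less[OF continuous_on_const h0(1)])
  have zW': "z \<in> W'" using h0(4) by (simp add: W'_def)

  define M where "M = (\<lambda>y. max ((cmod (F y))\<^sup>2) (\<beta>\<^sup>2))"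
  have Mpos: "M y > 0" for y
  proof -
    have "\<beta>\<^sup>2 > 0" using \<beta> by simp
    then show ?thesis unfolding M_def by (simp add: less_max_iff_disj)
  qed
  define k where "k = (\<lambda>y. cnj (F y) / complex_of_real (M y))"
  have M_c: "continuous_on UNIV M" unfolding M_def by (intro continuous_intros F_c)
  have k_c: "continuous_on UNIV k" unfolding k_def
    by (intro continuous_intros F_c M_c) (use Mpos in \<open>auto simp: less_le\<close>)
  have k_b: "cmod (k y) \<le> 1 / \<beta>" for y
  proof -
    have nk: "cmod (k y) = cmod (F y) / M y" using Mpos[of y] by (simp add: k_def norm_divide)
    have le: "\<beta> * cmod (F y) \<le> M y"
    proof (cases "\<beta> \<le> cmod (F y)")
      case True
      then have "\<beta> * cmod (F y) \<le> cmod (F y) * cmod (F y)" by (intro mult_right_mono) auto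
      then show ?thesis unfolding M_def by (simp add: power2_eq_square le_max_iff_disj)
    next
      case False
      then have "\<beta> * cmod (F y) \<le> \<beta> * \<beta>" using \<beta> by (intro mult_left_mono) auto
      then show ?thesis unfolding M_def by (simp add: power2_eq_square le_max_iff_disj)
    qed
    show ?thesis unfolding nk using le Mpos[of y] \<beta> by (simp add: field_simps)
  qed
  have kF: "k y * F y = 1" if y: "y \<in> W" for y
  proof -
    have b: "\<beta> < cmod (F y)" by (rule WF[OF y])
    then have "\<beta>\<^sup>2 < (cmod (F y))\<^sup>2" using \<beta> by (intro power_strict_mono) auto
    then have Meq: "M y = (cmod (F y))\<^sup>2" unfolding M_def by simp
    have Fnz: "F y \<noteq> 0" using b \<beta> by auto
    have h: "complex_of_real ((cmod (F y))\<^sup>2) = F y * cnj (F y)" by (rule complex_norm_square)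
    have nz: "F y * cnj (F y) \<noteq> 0" using Fnz by simp
    show ?thesis unfolding k_def Meq h using nz by (simp add: field_simps)
  qed

  define ch where "ch = (\<lambda>y. complex_of_real (h y))"
  define kh where "kh = (\<lambda>y. k y * ch y)"
  define c\<psi> where "c\<psi> = (\<lambda>y. complex_of_real (\<psi> y))"
  have ch_c: "continuous_on UNIV ch" unfolding ch_def by (intro continuous_intros h_c)
  have kh_c: "continuous_on UNIV kh" unfolding kh_def by (intro continuous_intros k_c ch_c)
  have c\<psi>_c: "continuous_on UNIV c\<psi>" unfolding c\<psi>_def \<psi>_def by (intro continuous_intros h_c)
  have ch_b: "cmod (ch y) \<le> 1" for y using h01[of y] by (simp add: ch_def)
  have kh_b: "cmod (kh y) \<le> 1 / \<beta>" for y
  proof -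
    have "cmod (kh y) = cmod (k y) * cmod (ch y)" by (simp add: kh_def norm_mult)
    also have "\<dots> \<le> (1 / \<beta>) * 1" using \<beta> by (intro mult_mono k_b ch_b) auto
    finally show ?thesis by simp
  qed
  have c\<psi>_b: "cmod (c\<psi> y) \<le> 1" for y
  proof -
    have "cmod (c\<psi> y) = \<bar>h y\<bar> ^ 2" by (simp add: c\<psi>_def \<psi>_def norm_power)
    also have "\<dots> \<le> 1" using h01[of y] by (simp add: power_le_one)
    finally show ?thesis .
  qed
  define j where "j = gen kh 0 \<circ> (a' \<circ> gen ch 0)"
  have jJ: "j \<in> J" unfolding j_def
    by (rule mL[OF gen_A[OF kh_c kh_b] mR[OF gen_A[OF ch_c ch_b] a'J]])
  have bj: "bounded_op Q j" using jJ JA A_bop by blast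
  define P\<psi> where "P\<psi> = gen c\<psi> 0"
  have bP: "bounded_op Q P\<psi>" unfolding P\<psi>_def by (rule gen_bop[OF c\<psi>_b])
  have bch: "bounded_op Q (gen ch 0)" by (rule gen_bop[OF ch_b])
  have bkh: "bounded_op Q (gen kh 0)" by (rule gen_bop[OF kh_b])
  define E where "E = op_diff j P\<psi>"
  have bE: "bounded_op Q E" unfolding E_def by (rule bop_op_diff[OF bj bP])

  have exact: "gen kh 0 (S (gen ch 0 \<xi>)) = P\<psi> \<xi>" if xi: "\<xi> \<in> l2 Q" for \<xi>
  proof -
    define \<eta> where "\<eta> = gen ch 0 \<xi>"
    have \<eta>_eq: "\<eta> = (\<lambda>e. ch (pt e) * \<xi> e)" unfolding \<eta>_def by (simp add: gen_l2eq[OF xi])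
    have \<eta>l: "\<eta> \<in> l2 Q" unfolding \<eta>_def by (rule bop_l2[OF bch xi])
    have S\<eta>: "S \<eta> = (\<lambda>e. \<Sum>i<n. \<alpha> i * (fs i (pt e) * \<eta> (shift (-gs i) e)))"
      unfolding S_def by (simp add: gen_l2eq[OF \<eta>l])
    have S\<eta>l: "S \<eta> \<in> l2 Q" by (rule bop_l2[OF bS \<eta>l])
    show ?thesis
    proof
      fix e
      have L: "gen kh 0 (S \<eta>) e = kh (pt e) * S \<eta> e" by (simp add: gen_l2eq[OF S\<eta>l])
      have R: "P\<psi> \<xi> e = c\<psi> (pt e) * \<xi> e" by (simp add: P\<psi>_def gen_l2eq[OF xi])
      show "gen kh 0 (S (gen ch 0 \<xi>)) e = P\<psi> \<xi> e"
      proof (cases "e \<in> Q \<and> h (pt e) \<noteq> 0")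
        case True
        then have eQ: "e \<in> Q" and pW: "pt e \<in> W" using hW by auto
        have trm: "\<alpha> i * (fs i (pt e) * \<eta> (shift (-gs i) e)) =
            (if i \<in> IH then \<alpha> i * fs i (pt e) * \<eta> e else 0)" if i: "i < n" for i
        proof (cases "gs i \<in> H")
          case True
          have "gs i \<in> Gs" using i by (simp add: Gs_def)
          then have "-gs i \<in> Gamma0 act (pt e)" using Wfix True pW by blast
          then have "shift (-gs i) e = e" by (rule shift_fix[OF eQ])
          then show ?thesis using True i by (simp add: IH_def)
        next
          case False
          have "gs i \<in> Gs" using i by (simp add: Gs_def)
          then have "act (-gs i) (pt e) \<notin> W" using Wmove False pW by blast
          then have "pt (shift (-gs i) e) \<notin> W" using pt_shift[OF eQ] by simp
          then have "h (pt (shift (-gs i) e)) = 0" using hW by blast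
          then have "\<eta> (shift (-gs i) e) = 0" by (simp add: \<eta>_eq ch_def)
          then show ?thesis using False by (simp add: IH_def)
        qed
        have "S \<eta> e = (\<Sum>i<n. if i \<in> IH then \<alpha> i * fs i (pt e) * \<eta> e else 0)"
          unfolding S\<eta> by (rule sum.cong) (auto simp: trm)
        also have "\<dots> = (\<Sum>i\<in>{..<n} \<inter> IH. \<alpha> i * fs i (pt e) * \<eta> e)"
          by (rule sum.inter_restrict[symmetric]) simp
        also have "{..<n} \<inter> IH = IH" by (auto simp: IH_def)
        also have "(\<Sum>i\<in>IH. \<alpha> i * fs i (pt e) * \<eta> e) = F (pt e) * \<eta> e"
          by (simp add: F_def sum_distrib_right)
        finally have Se: "S \<eta> e = F (pt e) * \<eta> e" .
        have "gen kh 0 (S \<eta>) e = (k (pt e) * F (pt e)) * (ch (pt e) * ch (pt e) * \<xi> e)"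
          using L Se by (simp add: kh_def \<eta>_eq algebra_simps)
        also have "\<dots> = ch (pt e) * ch (pt e) * \<xi> e" using kF[OF pW] by simp
        also have "\<dots> = P\<psi> \<xi> e" using R by (simp add: c\<psi>_def ch_def \<psi>_def power2_eq_square)
        finally show ?thesis by (simp add: \<eta>_def)
      next
        case False
        then consider "e \<notin> Q" | "h (pt e) = 0" by blast
        then show ?thesis
        proof cases
          case 1
          have "\<xi> e = 0" using l2_vanish[OF xi 1] .
          moreover have "S \<eta> e = 0" using l2_vanish[OF S\<eta>l 1] .
          ultimately show ?thesis using L R by (simp add: \<eta>_def)
        next
          case 2
          then show ?thesis using L R by (simp add: \<eta>_def kh_def ch_def c\<psi>_def \<psi>_def)
        qed
      qed
    qed
  qed
  have E_eq: "E \<xi> = gen kh 0 (D (gen ch 0 \<xi>))" if xi: "\<xi> \<in> l2 Q" for \<xi>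
  proof -
    define \<eta> where "\<eta> = gen ch 0 \<xi>"
    have \<eta>l: "\<eta> \<in> l2 Q" unfolding \<eta>_def by (rule bop_l2[OF bch xi])
    have l1: "a' \<eta> \<in> l2 Q" by (rule bop_l2[OF ba' \<eta>l])
    have l2: "S \<eta> \<in> l2 Q" by (rule bop_l2[OF bS \<eta>l])
    have l3: "D \<eta> \<in> l2 Q" by (rule bop_l2[OF bD \<eta>l])
    have "E \<xi> = (\<lambda>e. gen kh 0 (a' \<eta>) e - gen kh 0 (S \<eta>) e)"
      unfolding E_def op_diff_def j_def using exact[OF xi] by (simp add: \<eta>_def)
    also have "\<dots> = gen kh 0 (D \<eta>)"
      using l1 l2 l3 by (simp add: gen_l2eq D_def op_diff_def algebra_simps)
    finally show ?thesis by (simp add: \<eta>_def)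
  qed
  have E_half: "opnorm Q E \<le> 1/2"
  proof (rule opnorm_le)
    fix \<xi> assume xi: "\<xi> \<in> l2 Q"
    have \<eta>l: "gen ch 0 \<xi> \<in> l2 Q" by (rule bop_l2[OF bch xi])
    have n\<eta>: "l2norm Q (gen ch 0 \<xi>) \<le> 1 * l2norm Q \<xi>" by (rule gen_norm[OF xi ch_b])
    have "l2norm Q (E \<xi>) = l2norm Q (gen kh 0 (D (gen ch 0 \<xi>)))" using E_eq[OF xi] by simp
    also have "\<dots> \<le> (1/\<beta>) * l2norm Q (D (gen ch 0 \<xi>))"
      by (rule gen_norm[OF bop_l2[OF bD \<eta>l] kh_b])
    also have "\<dots> \<le> (1/\<beta>) * (opnorm Q D * l2norm Q (gen ch 0 \<xi>))"
      by (intro mult_left_mono opnorm_bound[OF bD \<eta>l]) (use \<beta> in auto)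
    also have "\<dots> \<le> (1/\<beta>) * (\<epsilon> * l2norm Q \<xi>)"
      using n\<eta> Dsmall \<beta> opnorm_nonneg[OF bD]
      by (intro mult_left_mono mult_mono) auto
    also have "\<dots> = (1/2) * l2norm Q \<xi>" using \<gamma>0 by (simp add: \<beta>_def \<epsilon>_def field_simps)
    finally show "l2norm Q (E \<xi>) \<le> 1/2 * l2norm Q \<xi>" .
  qed simp
  have "W' \<noteq> {}" using zW' by blast
  then obtain Ts where Ts: "finite Ts" "\<forall>y. \<exists>s\<in>Ts. act s y \<in> W'" using cover[OF oW'] by blast
  have cov\<rho>: "\<exists>s\<in>Ts. \<rho> (act s y) = 1" for y using Ts(2) \<rho>W' by blast
  define u where "u = (\<lambda>s y. \<rho> (act s y) / sqrt (\<Sum>s'\<in>Ts. (\<rho> (act s' y))\<^sup>2))"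
  note P = partition[OF \<rho>_c \<rho>01(1) \<rho>01(2) Ts(1) cov\<rho>]
  have u_c: "continuous_on UNIV (u s)" for s unfolding u_def by (rule P(1))
  have u_sum: "(\<Sum>s\<in>Ts. (u s y)\<^sup>2) = 1" for y unfolding u_def by (rule P(2))
  have u_nz: "\<rho> (act s y) \<noteq> 0" if "u s y \<noteq> 0" for s y using P(3) that unfolding u_def by blast
  have u_nn: "0 \<le> u s y" for s y unfolding u_def by (rule P(4))
  have u_b: "u s y \<le> 1" if s: "s \<in> Ts" for s y
  proof -
    have "(u s y)\<^sup>2 \<le> (\<Sum>s\<in>Ts. (u s y)\<^sup>2)" by (rule member_le_sum) (use s Ts(1) in auto)
    then have "(u s y)\<^sup>2 \<le> 1\<^sup>2" using u_sum[of y] by simp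
    then show ?thesis by (rule power2_le_imp_le) simp
  qed
  define cu where "cu s = (\<lambda>y. complex_of_real (u s y))" for s
  have cu_c: "continuous_on UNIV (cu s)" for s unfolding cu_def by (intro continuous_intros u_c)
  have cu_b: "cmod (cu s y) \<le> 1" if "s \<in> Ts" for s y using u_b[OF that] u_nn[of s y] by (simp add: cu_def)
  have cua_c: "continuous_on UNIV (\<lambda>y. cu s (act (-s) y))" for s
    by (rule continuous_on_compose2[OF cu_c act_cont]) auto
  have cua_b: "cmod (cu s (act (-s) y)) \<le> 1" if "s \<in> Ts" for s y using cu_b[OF that] .
  define trm2 where "trm2 s = gen (cu s) (-s) \<circ> (j \<circ> gen (\<lambda>y. cu s (act (-s) y)) s)" for s
  have trmJ: "trm2 s \<in> J" if s: "s \<in> Ts" for s unfolding trm2_def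
    by (rule mL[OF gen_A[OF cu_c cu_b[OF s]] mR[OF gen_A[OF cua_c cua_b[OF s]] jJ]])
  define j' where "j' = (\<lambda>\<xi> e. \<Sum>s\<in>Ts. trm2 s \<xi> e)"
  have sumJ: "(\<lambda>\<xi> e. \<Sum>s\<in>T'. trm2 s \<xi> e) \<in> J" if "finite T'" "T' \<subseteq> Ts" for T'
    using that
  proof (induction T' rule: finite_induct)
    case empty
    have "(\<lambda>\<xi> e. \<Sum>s\<in>{}. trm2 s \<xi> e) = zero_op" by (simp add: zero_op_def)
    then show ?case using zJ by simp
  next
    case (insert s T')
    have "(\<lambda>\<xi> c. trm2 s \<xi> c + (\<lambda>\<xi> e. \<Sum>s\<in>T'. trm2 s \<xi> e) \<xi> c) \<in> J"
      by (rule addJ) (use insert trmJ in auto)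
    then show ?case using insert by simp
  qed
  have j'J: "j' \<in> J" unfolding j'_def by (rule sumJ[OF Ts(1)]) simp
  define Iop where "Iop = gen one 0"
  have IopA: "Iop \<in> A" unfolding Iop_def by (rule gen_A[OF one_c one_b])
  have Iop_eq: "Iop \<xi> = (if \<xi> \<in> l2 Q then \<xi> else (\<lambda>_. 0))" for \<xi>
    by (simp add: Iop_def gen_eq one_def)
  have est: "opnorm Q (op_diff Iop j') \<le> 1/2"
  proof (rule opnorm_le)
    fix \<xi> assume xi: "\<xi> \<in> l2 Q"
    define w where "w s e = u s (pt e)" for s e
    define \<zeta> where "\<zeta> s = (\<lambda>d. complex_of_real (w s d) * \<xi> d)" for s
    define \<zeta>' where "\<zeta>' s = (\<lambda>d. \<zeta> s (shift (-s) d))" for s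
    define E' where "E' s vv = (\<lambda>e. E (\<lambda>d. vv (shift (-s) d)) (shift s e))" for s vv
    have wb: "cmod (complex_of_real (w s d)) \<le> 1" if "s \<in> Ts" for s d
      using u_b[OF that] u_nn by (simp add: w_def)
    have \<zeta>l: "\<zeta> s \<in> l2 Q" if "s \<in> Ts" for s
      unfolding \<zeta>_def by (rule l2_mult[OF xi]) (rule wb[OF that])
    have \<zeta>'l: "\<zeta>' s \<in> l2 Q" if "s \<in> Ts" for s
      unfolding \<zeta>'_def by (rule shift_l2[OF \<zeta>l[OF that]])
    have g2: "gen (\<lambda>y. cu s (act (-s) y)) s \<xi> = \<zeta>' s" for s
    proof
      fix d
      show "gen (\<lambda>y. cu s (act (-s) y)) s \<xi> d = \<zeta>' s d"
      proof (cases "d \<in> Q")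
        case True
        then show ?thesis by (simp add: gen_l2eq[OF xi] \<zeta>'_def \<zeta>_def w_def cu_def pt_shift)
      next
        case False
        then have "\<xi> (shift (-s) d) = 0" by (rule l2_vanish[OF xi shift_notQ])
        then show ?thesis by (simp add: gen_l2eq[OF xi] \<zeta>'_def \<zeta>_def)
      qed
    qed
    have jl: "j (\<zeta>' s) \<in> l2 Q" if "s \<in> Ts" for s by (rule bop_l2[OF bj \<zeta>'l[OF that]])
    have Pl: "P\<psi> (\<zeta>' s) \<in> l2 Q" if "s \<in> Ts" for s by (rule bop_l2[OF bP \<zeta>'l[OF that]])
    have T1: "trm2 s \<xi> e = cu s (pt e) * j (\<zeta>' s) (shift s e)" if s: "s \<in> Ts" for s e
      by (simp add: trm2_def g2 gen_l2eq[OF jl[OF s]])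
    have T2: "cu s (pt e) * P\<psi> (\<zeta>' s) (shift s e) = complex_of_real ((w s e)\<^sup>2) * \<xi> e"
      if s: "s \<in> Ts" for s e
    proof -
      have "P\<psi> (\<zeta>' s) (shift s e) = c\<psi> (pt (shift s e)) * \<zeta>' s (shift s e)"
        by (simp add: P\<psi>_def gen_l2eq[OF \<zeta>'l[OF s]])
      also have "\<zeta>' s (shift s e) = complex_of_real (w s e) * \<xi> e"
        by (simp add: \<zeta>'_def \<zeta>_def)
      finally have Pe: "P\<psi> (\<zeta>' s) (shift s e) = c\<psi> (pt (shift s e)) * (complex_of_real (w s e) * \<xi> e)" .
      show ?thesis
      proof (cases "e \<in> Q")
        case False
        then have "\<xi> e = 0" by (rule l2_vanish[OF xi])
        then show ?thesis using Pe by simp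
      next
        case True
        show ?thesis
        proof (cases "u s (pt e) = 0")
          case True
          then show ?thesis using Pe by (simp add: cu_def w_def)
        next
          case False
          then have "\<rho> (act s (pt e)) \<noteq> 0" by (rule u_nz)
          then have "\<psi> (act s (pt e)) = 1" by (rule \<rho>\<psi>)
          then have "c\<psi> (pt (shift s e)) = 1" using pt_shift[OF True] by (simp add: c\<psi>_def)
          then show ?thesis using Pe by (simp add: cu_def w_def power2_eq_square)
        qed
      qed
    qed
    have sumw: "(\<Sum>s\<in>Ts. (w s e)\<^sup>2) = 1" for e unfolding w_def by (rule u_sum)
    have exactI: "\<xi> e = (\<Sum>s\<in>Ts. cu s (pt e) * P\<psi> (\<zeta>' s) (shift s e))" for e
    proof -
      have "(\<Sum>s\<in>Ts. cu s (pt e) * P\<psi> (\<zeta>' s) (shift s e)) = (\<Sum>s\<in>Ts. complex_of_real ((w s e)\<^sup>2) * \<xi> e)"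
        by (rule sum.cong) (auto simp: T2)
      also have "\<dots> = complex_of_real (\<Sum>s\<in>Ts. (w s e)\<^sup>2) * \<xi> e"
        by (simp add: sum_distrib_right)
      also have "\<dots> = \<xi> e" by (simp add: sumw)
      finally show ?thesis by simp
    qed
    have diff: "op_diff Iop j' \<xi> =
        (\<lambda>e. - (\<Sum>s\<in>Ts. complex_of_real (w s e) * E' s (\<lambda>d. complex_of_real (w s d) * \<xi> d) e))"
    proof
      fix e
      have E'e: "E' s (\<lambda>d. complex_of_real (w s d) * \<xi> d) e = j (\<zeta>' s) (shift s e) - P\<psi> (\<zeta>' s) (shift s e)" for s
        by (simp add: E'_def \<zeta>'_def \<zeta>_def E_def op_diff_def)
      have "op_diff Iop j' \<xi> e = \<xi> e - (\<Sum>s\<in>Ts. trm2 s \<xi> e)"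
        by (simp add: op_diff_def Iop_eq xi j'_def)
      also have "\<dots> = (\<Sum>s\<in>Ts. cu s (pt e) * P\<psi> (\<zeta>' s) (shift s e)) - (\<Sum>s\<in>Ts. cu s (pt e) * j (\<zeta>' s) (shift s e))"
        using exactI[of e] T1 by simp
      also have "\<dots> = - (\<Sum>s\<in>Ts. cu s (pt e) * (j (\<zeta>' s) (shift s e) - P\<psi> (\<zeta>' s) (shift s e)))"
        by (subst sum_negf[symmetric]) (simp add: sum_subtractf[symmetric] algebra_simps)
      also have "\<dots> = - (\<Sum>s\<in>Ts. complex_of_real (w s e) * E' s (\<lambda>d. complex_of_real (w s d) * \<xi> d) e)"
        unfolding E'e by (simp add: cu_def w_def)
      finally show "op_diff Iop j' \<xi> e = - (\<Sum>s\<in>Ts. complex_of_real (w s e) * E' s (\<lambda>d. complex_of_real (w s d) * \<xi> d) e)" .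
    qed
    have El2: "E' s vv \<in> l2 Q" if "s \<in> Ts" "vv \<in> l2 Q" for s vv
      unfolding E'_def by (rule shift_l2[OF bop_l2[OF bE shift_l2[OF that(2)]]])
    have En: "l2norm Q (E' s vv) \<le> opnorm Q E * l2norm Q vv" if "s \<in> Ts" "vv \<in> l2 Q" for s vv
    proof -
      have "l2norm Q (E' s vv) = l2norm Q (E (\<lambda>d. vv (shift (-s) d)))"
        unfolding E'_def by (rule shift_l2norm)
      also have "\<dots> \<le> opnorm Q E * l2norm Q (\<lambda>d. vv (shift (-s) d))"
        by (rule opnorm_bound[OF bE shift_l2[OF that(2)]])
      also have "\<dots> = opnorm Q E * l2norm Q vv" by (simp add: shift_l2norm)
      finally show ?thesis .
    qed
    have "l2norm Q (op_diff Iop j' \<xi>) =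
        l2norm Q (\<lambda>e. \<Sum>s\<in>Ts. complex_of_real (w s e) * E' s (\<lambda>d. complex_of_real (w s d) * \<xi> d) e)"
      unfolding diff by (rule l2norm_uminus)
    also have "\<dots> \<le> opnorm Q E * l2norm Q \<xi>"
      by (rule colrow[OF Ts(1) xi opnorm_nonneg[OF bE] El2 En]) (simp_all add: sumw)
    also have "\<dots> \<le> 1/2 * l2norm Q \<xi>" by (rule mult_right_mono[OF E_half]) simp
    finally show "l2norm Q (op_diff Iop j' \<xi>) \<le> 1/2 * l2norm Q \<xi>" .
  qed simp
  show ?thesis
    by (rule ideal_unit[OF J A_bop IopA Iop_eq j'J est])
qed

end

theorem mainTheorem17:
  fixes act :: "'g::group_add \<Rightarrow> 'x::t2_space \<Rightarrow> 'x" and x :: 'x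
  assumes "gamma_boundary act"
    and "x \<in> X00 act"
  shows "simple_cstar (cosets (Gamma0 act x)) (crossed_alg act x)"
proof -
  have ga: "group_action act" and mi: "minimal_action act" and cp: "compact (UNIV :: 'x set)"
    using assms(1) unfolding gamma_boundary_def by auto
  interpret bnd2 act x
  proof (rule bnd2.intro)
    show "bnd act" by (rule bnd.intro[OF ga])
    show "bnd2_axioms act x" by (rule bnd2_axioms.intro[OF mi cp assms(2)])
  qed
  define one where "one = (\<lambda>_::'x. 1::complex)"
  have one_c: "continuous_on UNIV one" and one_b: "\<And>y. cmod (one y) \<le> 1" by (auto simp: one_def)
  have IA: "gen one 0 \<in> crossed_alg act x" by (rule gen_A[OF one_c one_b])
  have "gen one 0 (delta H) H = 1"
    using delta_l2[OF HQ] by (simp add: gen_eq one_def delta_def)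
  then have "gen one 0 \<noteq> zero_op" by (auto simp: zero_op_def)
  then have ne: "crossed_alg act x \<noteq> {zero_op}" using IA by blast
  show ?thesis
    unfolding simple_cstar_def using ne main_ideal by blast
qed

end
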